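(* Assume the network is UJSC, the weight rules hold, and the interior-point condition for $(\mathrm{ADRCP}^k)$ holds. Let the stepsizes $\alpha(t)>0$ be nonincreasing with $\alpha(t)=\Theta(1/\sqrt{t})$, i.e. there are constants $0<\kappa_1\le\kappa_2$ with $\kappa_1/\sqrt{t+1}\le\alpha(t)\le\kappa_2/\sqrt{t+1}$ for all $t\ge0$. For the DPG iteration $\theta_i(t+1)=P_{\Omega_i}\big[\sum_{j=1}^m a_{ij}(t)\theta_j(t)-\alpha(t)c\big]$ define $\hat\theta_i(t)=\sum_{r=0}^t\alpha(r)\theta_i(r)\big/\sum_{\tau=0}^t\alpha(\tau)$. Then there is a constant $K$ such that for all $i\in\mathcal V$ and all $t\ge 1$, $|f_0(\hat\theta_i(t))-f_0^*|\le K\,\ln(t+1)/\sqrt{t}$; i.e. $|f_0(\hat\theta_i(t))-f_0^*|=O(\ln t/\sqrt t)$.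
   Context: Network: agents $\mathcal V=\{1,\dots,m\}$. For each time slot $t\in\mathbb Z_{\ge 0}$ there is a directed graph $\mathcal G(t)=(\mathcal V,\mathcal E(t))$; $(j,i)\in\mathcal E(t)$ means agent $j$ can send information to agent $i$ at slot $t$, and $N_i^{in}(t)=\{j:(j,i)\in\mathcal E(t)\}$. UJSC (uniform joint strong connectivity): there is an integer $S>0$ such that for every $t\ge 0$ the graph $(\mathcal V,\mathcal E(t)\cup\cdots\cup\mathcal E(t+S-1))$ is strongly connected. Weight rules: $A(t)=[a_{ij}(t)]\in\mathbb R^{m\times m}$ with $a_{ij}(t)>0$ if $j\in N_i^{in}(t)$ and $a_{ij}(t)=0$ otherwise; $\sum_{j}a_{ij}(t)=1$ for all $i,t$ (row stochastic, not necessarily column stochastic); $(i,i)\in\mathcal E(t)$ for all $i,t$; and there is $\gamma\in(0,1)$ with $a_{ij}(t)\ge\gamma$ whenever $a_{ij}(t)>0$ (in particular $a_{ii}(t)\ge\gamma$). Problem data: $X\subseteq\mathbb R^n$ is nonempty, compact and convex. For each $i\in\mathcal V$: $f_i:\mathbb R^n\to\mathbb R$ is convex; $Y_i\subseteq\mathbb R$ is nonempty, compact, convex; $g_i:\mathbb R^n\times Y_i\to\mathbb R$ is continuous on $X\times Y_i$ and convex in $x$ for each fixed $y$; $Y_i^k\subset Y_i$ is a finite set and $\epsilon_i^k>0$. The problem $(\mathrm{ADRCP}^k)$ is: minimize $\sum_{i=1}^m f_i(x)$ over $x\in X$ subject to $g_i(x,y)\le-\epsilon_i^k$ for all $y\in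 Y_i^k$ and all $i$. Interior-point condition: the feasible set of $(\mathrm{ADRCP}^k)$ is nonempty and there is $\tilde x$ in it with $g_i(\tilde x,y)<-\epsilon_i^k$ for all $y\in Y_i^k$, $i\in\mathcal V$. Epigraphic reformulation: $\theta=(x,u)\in\Theta=X\times\mathbb R^m$; $\Omega_i=\{(x,u)\in\Theta: f_i(x)-u_i\le 0,\ g_i(x,y)\le-\epsilon_i^k\ \forall y\in Y_i^k\}$; $\Omega=\bigcap_{i=1}^m\Omega_i$; $c=(0_n,\tfrac1m\mathbf 1_m)\in\mathbb R^{n+m}$ and $f_0(\theta)=c^\top\theta=\tfrac1m\sum_i u_i$. $\Omega^*$ is the set of minimizers of $f_0$ over $\Omega$ and $f_0^*$ the optimal value. $P_K$ denotes Euclidean projection onto a closed convex set $K$. Initial points $\theta_i(0)\in\mathbb R^{n+m}$ are arbitrary. *)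

theory Defs
  imports "HOL-Analysis.Analysis"
begin

text \<open>Agents are the elements of a finite type 'm (V = UNIV). Decision variable x lives in
  real^'n; the epigraphic variable is theta = (x,u) in real^'n \<times> real^'m (Euclidean R^(n+m)).\<close>

definition strongly_connected :: "('m \<times> 'm) set \<Rightarrow> bool" where
  "strongly_connected E \<longleftrightarrow> (\<forall>i j. (i, j) \<in> E\<^sup>*)"

text \<open>Uniform joint strong connectivity; (j,i) in E t means j can send to i at slot t.\<close>
definition UJSC :: "(nat \<Rightarrow> ('m \<times> 'm) set) \<Rightarrow> bool" where
  "UJSC E \<longleftrightarrow> (\<exists>S::nat. S > 0 \<and> (\<forall>t. strongly_connected (\<Union>s\<in>{t..<t+S}. E s)))"

definition weight_rules ::
  "(nat \<Rightarrow> ('m::finite \<times> 'm) set) \<Rightarrow> (nat \<Rightarrow> 'm \<Rightarrow> 'm \<Rightarrow> real) \<Rightarrow> real \<Rightarrow> bool" where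
  "weight_rules E a \<gamma> \<longleftrightarrow>
     (\<forall>t i j. ((j, i) \<in> E t \<longrightarrow> a t i j > 0) \<and> ((j, i) \<notin> E t \<longrightarrow> a t i j = 0)) \<and>
     (\<forall>t i. (\<Sum>j\<in>UNIV. a t i j) = 1) \<and>
     (\<forall>t i. (i, i) \<in> E t) \<and>
     0 < \<gamma> \<and> \<gamma> < 1 \<and>
     (\<forall>t i j. a t i j > 0 \<longrightarrow> a t i j \<ge> \<gamma>)"

definition Omega_i ::
  "(real^'n) set \<Rightarrow> ('m \<Rightarrow> real^'n \<Rightarrow> real) \<Rightarrow> ('m \<Rightarrow> real^'n \<Rightarrow> real \<Rightarrow> real)
    \<Rightarrow> ('m \<Rightarrow> real set) \<Rightarrow> ('m \<Rightarrow> real) \<Rightarrow> 'm \<Rightarrow> ((real^'n) \<times> (real^'m)) set" where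
  "Omega_i X f g Yk eps i =
     {\<theta>. fst \<theta> \<in> X \<and> f i (fst \<theta>) - snd \<theta> $ i \<le> 0 \<and> (\<forall>y\<in>Yk i. g i (fst \<theta>) y \<le> - eps i)}"

definition Omega ::
  "(real^'n) set \<Rightarrow> ('m \<Rightarrow> real^'n \<Rightarrow> real) \<Rightarrow> ('m \<Rightarrow> real^'n \<Rightarrow> real \<Rightarrow> real)
    \<Rightarrow> ('m \<Rightarrow> real set) \<Rightarrow> ('m \<Rightarrow> real) \<Rightarrow> ((real^'n) \<times> (real^'m)) set" where
  "Omega X f g Yk eps = (\<Inter>i. Omega_i X f g Yk eps i)"

definition cvec :: "(real^'n) \<times> (real^'m::finite)" where
  "cvec = (0, \<chi> i. 1 / real CARD('m))"

definition f0 :: "(real^'n) \<times> (real^'m::finite) \<Rightarrow> real" where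
  "f0 \<theta> = cvec \<bullet> \<theta>"

definition f0star ::
  "(real^'n) set \<Rightarrow> ('m::finite \<Rightarrow> real^'n \<Rightarrow> real) \<Rightarrow> ('m \<Rightarrow> real^'n \<Rightarrow> real \<Rightarrow> real)
    \<Rightarrow> ('m \<Rightarrow> real set) \<Rightarrow> ('m \<Rightarrow> real) \<Rightarrow> real" where
  "f0star X f g Yk eps = Inf (f0 ` Omega X f g Yk eps)"

end

theory Submission
  imports Defs
begin


definition mx :: "('m::finite \<Rightarrow> real) \<Rightarrow> real" where "mx z = Max (range z)"
definition mn :: "('m::finite \<Rightarrow> real) \<Rightarrow> real" where "mn z = Min (range z)"

lemma mx_ge: "z i \<le> mx z" by (simp add: mx_def)
lemma mn_le: "mn z \<le> z i" by (simp add: mn_def)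
lemma mx_obt: "\<exists>i. mx z = z i" unfolding mx_def
proof -
  have "Max (range z) \<in> range z" by (rule Max_in) auto
  then show "\<exists>i. Max (range z) = z i" by (metis rangeE)
qed
lemma mn_obt: "\<exists>i. mn z = z i" unfolding mn_def
proof -
  have "Min (range z) \<in> range z" by (rule Min_in) auto
  then show "\<exists>i. Min (range z) = z i" by (metis rangeE)
qed
lemma mx_le: "(\<And>i. z i \<le> B) \<Longrightarrow> mx z \<le> B" using mx_obt by metis
lemma mn_ge: "(\<And>i. B \<le> z i) \<Longrightarrow> B \<le> mn z" using mn_obt by metis
lemma mn_neg: "mn (\<lambda>i. - z i) = - mx z"
proof (rule antisym)
  obtain i where "mx z = z i" using mx_obt by blast
  then show "mn (\<lambda>i. - z i) \<le> - mx z" using mn_le[of "\<lambda>i. - z i" i] by simp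
  show "- mx z \<le> mn (\<lambda>i. - z i)" by (rule mn_ge) (simp add: mx_ge)
qed

lemma avg_lower:
  fixes w z :: "'m::finite \<Rightarrow> real"
  assumes nn: "\<And>l. w l \<ge> 0" and s1: "(\<Sum>l\<in>UNIV. w l) = 1" and lb: "\<And>l. z l \<ge> c"
  shows "(\<Sum>l\<in>UNIV. w l * z l) \<ge> c + w j * (z j - c)"
proof -
  have "(\<Sum>l\<in>UNIV. w l * z l) = (\<Sum>l\<in>UNIV. w l * (z l - c)) + c * (\<Sum>l\<in>UNIV. w l)"
    by (simp add: algebra_simps sum.distrib sum_distrib_left sum_subtractf)
  also have "\<dots> = (\<Sum>l\<in>UNIV. w l * (z l - c)) + c" using s1 by simp
  also have "(\<Sum>l\<in>UNIV. w l * (z l - c)) \<ge> w j * (z j - c)"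
    by (rule member_le_sum) (auto intro: mult_nonneg_nonneg nn simp: lb)
  ultimately show ?thesis by linarith
qed

lemma avg_lower0:
  fixes w z :: "'m::finite \<Rightarrow> real"
  assumes nn: "\<And>l. w l \<ge> 0" and s1: "(\<Sum>l\<in>UNIV. w l) = 1" and lb: "\<And>l. z l \<ge> c"
  shows "(\<Sum>l\<in>UNIV. w l * z l) \<ge> c"
proof -
  have "(\<Sum>l\<in>UNIV. w l * z l) \<ge> (\<Sum>l\<in>UNIV. w l * c)"
    by (rule sum_mono) (simp add: mult_left_mono nn lb)
  also have "(\<Sum>l\<in>UNIV. w l * c) = c" using s1 by (simp add: sum_distrib_right[symmetric])
  finally show ?thesis by simp
qed

lemma rtrancl_exit:
  assumes "(x, y) \<in> U\<^sup>*" "x \<in> A" "y \<notin> A"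
  shows "\<exists>p q. (p, q) \<in> U \<and> p \<in> A \<and> q \<notin> A"
  using assms by (induction rule: rtrancl_induct) auto

locale cons =
  fixes E :: "nat \<Rightarrow> ('m::finite \<times> 'm) set" and a :: "nat \<Rightarrow> 'm \<Rightarrow> 'm \<Rightarrow> real"
    and \<gamma> :: real and S :: nat
  assumes wr: "weight_rules E a \<gamma>" and Spos: "S > 0"
    and sc: "\<And>t. strongly_connected (\<Union>s\<in>{t..<t+S}. E s)"
begin

lemma a_nonneg: "a t i j \<ge> 0"
  using wr unfolding weight_rules_def by (metis less_eq_real_def)
lemma a_sum: "(\<Sum>j\<in>UNIV. a t i j) = 1"
  using wr unfolding weight_rules_def by blast
lemma gam: "0 < \<gamma>" "\<gamma> < 1"
  using wr unfolding weight_rules_def by auto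
lemma a_edge: "(j, i) \<in> E t \<Longrightarrow> a t i j \<ge> \<gamma>"
  using wr unfolding weight_rules_def by blast
lemma a_diag: "a t i i \<ge> \<gamma>"
  using wr a_edge unfolding weight_rules_def by blast


context
  fixes z e :: "nat \<Rightarrow> 'm \<Rightarrow> real" and bb :: "nat \<Rightarrow> real"
  assumes rec: "\<And>s i. z (Suc s) i = (\<Sum>j\<in>UNIV. a s i j * z s j) + e s i"
    and eb: "\<And>s i. \<bar>e s i\<bar> \<le> bb s"
begin

lemma lower_all: "z (t + n) i \<ge> mn (z t) - (\<Sum>r\<in>{t..<t+n}. bb r)"
proof (induction n arbitrary: i)
  case 0
  then show ?case by (simp add: mn_le)
next
  case (Suc n)
  have "(\<Sum>j\<in>UNIV. a (t+n) i j * z (t+n) j) \<ge> mn (z t) - (\<Sum>r\<in>{t..<t+n}. bb r)"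
    by (rule avg_lower0) (auto simp: a_nonneg a_sum Suc.IH)
  moreover have "e (t+n) i \<ge> - bb (t+n)" using eb[of "t+n" i] by linarith
  moreover have "(\<Sum>r\<in>{t..<t+Suc n}. bb r) = (\<Sum>r\<in>{t..<t+n}. bb r) + bb (t+n)"
    by simp
  ultimately show ?case using rec[of "t+n" i] by simp
qed

lemma window_lower:
  "z (t + (CARD('m) * S)) i \<ge> mn (z t) + \<gamma>^(CARD('m) * S) * (z t k - mn (z t)) - (\<Sum>r\<in>{t..<t+(CARD('m) * S)}. bb r)"
proof -
  define c0 where "c0 = mn (z t)"
  define d where "d = z t k - c0"
  define B where "B n = (\<Sum>r\<in>{t..<t+n}. bb r)" for n
  define R where "R n = {i. z (t+n) i \<ge> c0 + \<gamma>^n * d - B n}" for n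
  have d0: "d \<ge> 0" unfolding d_def c0_def by (simp add: mn_le)
  have BS: "B (Suc n) = B n + bb (t+n)" for n unfolding B_def by simp
  have low: "z (t+n) l \<ge> c0 - B n" for n l using lower_all unfolding c0_def B_def by blast
  have grow: "i \<in> R (Suc n)" if "j \<in> R n" "a (t+n) i j \<ge> \<gamma>" for i j n
  proof -
    have "(\<Sum>l\<in>UNIV. a (t+n) i l * z (t+n) l) \<ge> (c0 - B n) + a (t+n) i j * (z (t+n) j - (c0 - B n))"
      by (rule avg_lower) (auto simp: a_nonneg a_sum low)
    moreover have "z (t+n) j - (c0 - B n) \<ge> \<gamma>^n * d" using that(1) unfolding R_def by simp
    moreover have "\<gamma>^n * d \<ge> 0" using gam d0 by simp
    ultimately have "(\<Sum>l\<in>UNIV. a (t+n) i l * z (t+n) l) \<ge> (c0 - B n) + \<gamma> * (\<gamma>^n * d)"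
      using that(2) gam by (smt (verit) mult_mono)
    moreover have "e (t+n) i \<ge> - bb (t+n)" using eb[of "t+n" i] by linarith
    ultimately show ?thesis using rec[of "t+n" i] unfolding R_def by (simp add: BS)
  qed
  have mono1: "R n \<subseteq> R (Suc n)" for n using grow a_diag by blast
  have mono: "R n \<subseteq> R (n + q)" for n q
    by (induction q) (use mono1 in auto)
  have k0: "k \<in> R 0" unfolding R_def B_def d_def by simp
  have kn: "k \<in> R n" for n using mono[of 0 n] k0 by auto
  have strict: "R n \<subset> R (n + S)" if nU: "R n \<noteq> UNIV" for n
  proof -
    obtain i where i: "i \<notin> R n" using nU by blast
    have "(k, i) \<in> (\<Union>s\<in>{t+n..<t+n+S}. E s)\<^sup>*"
      using sc[of "t+n"] unfolding strongly_connected_def by blast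
    then obtain p q where pq: "(p, q) \<in> (\<Union>s\<in>{t+n..<t+n+S}. E s)" "p \<in> R n" "q \<notin> R n"
      using rtrancl_exit[of k i _ "R n"] kn i by blast
    then obtain s where s: "s \<in> {t+n..<t+n+S}" "(p, q) \<in> E s" by blast
    define n' where "n' = s - t"
    have sn: "s = t + n'" "n \<le> n'" "n' < n + S" using s unfolding n'_def by auto
    have "p \<in> R n'" using mono[of n "n' - n"] pq(2) sn by auto
    then have "q \<in> R (Suc n')" using grow[of p n' q] a_edge[of p q s] s sn by simp
    then have "q \<in> R (n + S)" using mono[of "Suc n'" "n + S - Suc n'"] sn by auto
    then show ?thesis using mono[of n S] pq(3) by blast
  qed
  have card: "card (R (q*S)) \<ge> min CARD('m) (Suc q)" for q
  proof (induction q)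
    case 0
    have "R 0 \<noteq> {}" using k0 by blast
    then show ?case by (simp add: card_gt_0_iff Suc_le_eq)
  next
    case (Suc q)
    show ?case
    proof (cases "R (q*S) = UNIV")
      case True
      then have "R (Suc q * S) = UNIV" using mono[of "q*S" S] by (auto simp: add.commute)
      then show ?thesis by simp
    next
      case False
      then have "R (q*S) \<subset> R (Suc q * S)" using strict[of "q*S"] by (simp add: add.commute)
      then have "card (R (q*S)) < card (R (Suc q * S))" by (simp add: psubset_card_mono)
      then show ?thesis using Suc.IH by linarith
    qed
  qed
  have "card (R (CARD('m) * S)) \<ge> CARD('m)" using card[of "CARD('m)"] by (simp add: mult.commute)
  then have "R (CARD('m) * S) = UNIV" using card_seteq[of UNIV "R (CARD('m) * S)"] by auto
  then have "i \<in> R (CARD('m) * S)" by blast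
  then show ?thesis unfolding R_def c0_def d_def B_def by simp
qed

end

lemma window_spread:
  fixes z e :: "nat \<Rightarrow> 'm \<Rightarrow> real" and bb :: "nat \<Rightarrow> real"
  assumes rec: "\<And>s i. z (Suc s) i = (\<Sum>j\<in>UNIV. a s i j * z s j) + e s i"
    and eb: "\<And>s i. \<bar>e s i\<bar> \<le> bb s"
  shows "mx (z (t+(CARD('m) * S))) - mn (z (t+(CARD('m) * S))) \<le> (1 - \<gamma>^(CARD('m) * S)) * (mx (z t) - mn (z t)) + 2 * (\<Sum>r\<in>{t..<t+(CARD('m) * S)}. bb r)"
    and "mx (z (t+n)) - mn (z (t+n)) \<le> mx (z t) - mn (z t) + 2 * (\<Sum>r\<in>{t..<t+n}. bb r)"
proof -
  obtain k :: 'm where True by blast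
  have rec': "\<And>s i. - z (Suc s) i = (\<Sum>j\<in>UNIV. a s i j * - z s j) + - e s i"
    by (simp add: rec sum_negf)
  have eb': "\<And>s i. \<bar>- e s i\<bar> \<le> bb s" using eb by simp
  note lo = window_lower[OF rec eb, where t=t and k=k]
  note hi = window_lower[of "\<lambda>s i. - z s i" "\<lambda>s i. - e s i" bb, OF rec' eb', where t=t and k=k,
      unfolded mn_neg]
  define B where "B = (\<Sum>r\<in>{t..<t+(CARD('m) * S)}. bb r)"
  have "mx (z (t+(CARD('m) * S))) \<le> mx (z t) - \<gamma>^(CARD('m) * S) * (mx (z t) - z t k) + B"
    by (rule mx_le) (use hi in \<open>auto simp: B_def algebra_simps\<close>)
  moreover have "mn (z (t+(CARD('m) * S))) \<ge> mn (z t) + \<gamma>^(CARD('m) * S) * (z t k - mn (z t)) - B"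
    by (rule mn_ge) (use lo in \<open>auto simp: B_def\<close>)
  ultimately show "mx (z (t+(CARD('m) * S))) - mn (z (t+(CARD('m) * S))) \<le> (1 - \<gamma>^(CARD('m) * S)) * (mx (z t) - mn (z t)) + 2 * B"
    by (simp add: algebra_simps)
  note lo2 = lower_all[OF rec eb, of t n]
  have hi2: "- z (t + n) i \<ge> - mx (z t) - (\<Sum>r\<in>{t..<t+n}. bb r)" for i
    using lower_all[OF rec' eb', of t n i] by (simp add: mn_neg)
  have "mx (z (t+n)) \<le> mx (z t) + (\<Sum>r\<in>{t..<t+n}. bb r)"
    by (rule mx_le) (use hi2 in \<open>fastforce simp: algebra_simps\<close>)
  moreover have "mn (z (t+n)) \<ge> mn (z t) - (\<Sum>r\<in>{t..<t+n}. bb r)"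
    by (rule mn_ge) (use lo2 in auto)
  ultimately show "mx (z (t+n)) - mn (z (t+n)) \<le> mx (z t) - mn (z t) + 2 * (\<Sum>r\<in>{t..<t+n}. bb r)"
    by simp
qed

end


lemma geo_sub:
  fixes \<rho> :: real
  assumes "0 \<le> \<rho>" "\<rho> < 1" "finite A" "\<And>t. t \<in> A \<Longrightarrow> s \<le> t"
  shows "(\<Sum>t\<in>A. \<rho>^(t - s)) \<le> 1 / (1 - \<rho>)"
proof -
  have inj: "inj_on (\<lambda>t. t - s) A"
    using assms(4) by (intro inj_onI) (metis le_add_diff_inverse)
  have "(\<Sum>t\<in>A. \<rho>^(t - s)) = (\<Sum>k\<in>(\<lambda>t. t - s) ` A. \<rho>^k)"
    by (simp add: sum.reindex[OF inj] o_def)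
  also have "\<dots> \<le> (\<Sum>k. \<rho>^k)"
    by (rule sum_le_suminf) (use assms in \<open>auto intro: summable_geometric\<close>)
  also have "\<dots> = 1 / (1 - \<rho>)" by (rule suminf_geometric) (use assms in auto)
  finally show ?thesis .
qed

lemma unroll:
  fixes sp bb :: "nat \<Rightarrow> real" and L :: nat and \<beta> \<rho> :: real
  assumes L: "L > 0" and b: "0 < \<beta>" and rho: "\<rho>^L = \<beta>" "0 < \<rho>" "\<rho> \<le> 1"
    and bb: "\<And>s. bb s \<ge> 0" and sp0: "sp t0 \<ge> 0"
    and step: "\<And>t n. t \<ge> t0 \<Longrightarrow> sp (t+n) \<le> sp t + 2 * (\<Sum>r\<in>{t..<t+n}. bb r)"
    and win: "\<And>t. t \<ge> t0 \<Longrightarrow> sp (t+L) \<le> \<beta> * sp t + 2 * (\<Sum>r\<in>{t..<t+L}. bb r)"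
  shows "t \<ge> t0 \<Longrightarrow> sp t \<le> (\<rho>^(t-t0) * sp t0 + 2 * (\<Sum>s\<in>{t0..<t}. \<rho>^(t-1-s) * bb s)) / \<beta>"
proof (induction t rule: less_induct)
  case (less t)
  have pw: "\<beta> \<le> \<rho>^k" if "k \<le> L" for k
    using power_decreasing[OF that, of \<rho>] rho by simp
  have bbs: "bb s \<le> \<rho>^(t-1-s) * bb s / \<beta>" if "t - 1 - s \<le> L" for s
  proof -
    have "\<beta> * bb s \<le> \<rho>^(t-1-s) * bb s" using pw[OF that] bb[of s] by (simp add: mult_right_mono)
    then show ?thesis using b by (simp add: field_simps)
  qed
  have eqf: "(\<rho>^(t-t0) * sp t0 + 2 * (\<Sum>s\<in>{t0..<t}. \<rho>^(t-1-s) * bb s)) / \<beta>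
      = \<rho>^(t-t0) * sp t0 / \<beta> + 2 * (\<Sum>s\<in>{t0..<t}. \<rho>^(t-1-s) * bb s / \<beta>)"
    by (simp only: add_divide_distrib times_divide_eq_right[symmetric] sum_divide_distrib)
  show ?case
  proof (cases "t < t0 + L")
    case True
    have "sp t \<le> sp t0 + 2 * (\<Sum>r\<in>{t0..<t}. bb r)"
      using step[of t0 "t - t0"] less.prems by simp
    also have "sp t0 \<le> \<rho>^(t-t0) * sp t0 / \<beta>"
    proof -
      have "\<beta> * sp t0 \<le> \<rho>^(t-t0) * sp t0" using pw[of "t-t0"] True sp0 by (simp add: mult_right_mono)
      then show ?thesis using b by (simp add: field_simps)
    qed
    also have "(\<Sum>r\<in>{t0..<t}. bb r) \<le> (\<Sum>r\<in>{t0..<t}. \<rho>^(t-1-r) * bb r / \<beta>)"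
      by (rule sum_mono) (use bbs True in auto)
    finally show ?thesis unfolding eqf by linarith
  next
    case False
    define t' where "t' = t - L"
    have t': "t = t' + L" "t' \<ge> t0" "t' < t" using False L unfolding t'_def by auto
    have IH: "sp t' \<le> (\<rho>^(t'-t0) * sp t0 + 2 * (\<Sum>s\<in>{t0..<t'}. \<rho>^(t'-1-s) * bb s)) / \<beta>"
      using less.IH[OF t'(3) t'(2)] .
    have e1: "\<rho>^(t-t0) = \<rho>^(t'-t0) * \<beta>" using t' rho(1)
      by (metis add.commute add_diff_assoc2 power_add)
    have e2: "\<rho>^(t-1-s) = \<rho>^(t'-1-s) * \<beta>" if "s < t'" for s
    proof -
      have "t - 1 - s = (t' - 1 - s) + L" using that t' by simp
      then show ?thesis using rho(1) by (simp add: power_add)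
    qed
    have "sp t \<le> \<beta> * sp t' + 2 * (\<Sum>r\<in>{t'..<t}. bb r)" using win[OF t'(2)] t' by simp
    also have "\<beta> * sp t' \<le> \<rho>^(t'-t0) * sp t0 + 2 * (\<Sum>s\<in>{t0..<t'}. \<rho>^(t'-1-s) * bb s)"
      using IH b by (simp add: field_simps)
    also have "\<rho>^(t'-t0) * sp t0 = \<rho>^(t-t0) * sp t0 / \<beta>" using e1 b by simp
    also have "(\<Sum>s\<in>{t0..<t'}. \<rho>^(t'-1-s) * bb s) = (\<Sum>s\<in>{t0..<t'}. \<rho>^(t-1-s) * bb s / \<beta>)"
      by (rule sum.cong) (use e2 b in auto)
    also have "(\<Sum>r\<in>{t'..<t}. bb r) \<le> (\<Sum>r\<in>{t'..<t}. \<rho>^(t-1-r) * bb r / \<beta>)"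
      by (rule sum_mono) (use bbs t' in auto)
    finally have "sp t \<le> \<rho>^(t-t0) * sp t0 / \<beta> + 2 * ((\<Sum>s\<in>{t0..<t'}. \<rho>^(t-1-s) * bb s / \<beta>)
        + (\<Sum>r\<in>{t'..<t}. \<rho>^(t-1-r) * bb r / \<beta>))" by simp
    also have "(\<Sum>s\<in>{t0..<t'}. \<rho>^(t-1-s) * bb s / \<beta>) + (\<Sum>r\<in>{t'..<t}. \<rho>^(t-1-r) * bb r / \<beta>)
        = (\<Sum>s\<in>{t0..<t}. \<rho>^(t-1-s) * bb s / \<beta>)"
      by (rule sum.atLeastLessThan_concat) (use t' in auto)
    finally show ?thesis unfolding eqf by linarith
  qed
qed

lemma aux_eq: "(a::real) * ((r * s + 2 * Y) / b) = (a * r * s) / b + 2 * (a * Y) / b"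
  by (simp add: add_divide_distrib algebra_simps)

lemma weighted_sum:
  fixes sp bb \<alpha> :: "nat \<Rightarrow> real" and \<beta> \<rho> :: real
  assumes b: "0 < \<beta>" and rho: "0 \<le> \<rho>" "\<rho> < 1"
    and bb: "\<And>s. bb s \<ge> 0" and sp0: "sp t0 \<ge> 0"
    and al: "\<And>t. \<alpha> t \<ge> 0" "\<And>s t. s \<le> t \<Longrightarrow> \<alpha> t \<le> \<alpha> s"
    and spb: "\<And>t. t \<ge> t0 \<Longrightarrow> sp t \<le> (\<rho>^(t-t0) * sp t0 + 2 * (\<Sum>s\<in>{t0..<t}. \<rho>^(t-1-s) * bb s)) / \<beta>"
  shows "(\<Sum>t\<in>{t0..T}. \<alpha> t * sp t) \<le>
     (\<alpha> t0 * sp t0 / (1 - \<rho>) + 2 / (1 - \<rho>) * (\<Sum>s\<in>{t0..T}. \<alpha> s * bb s)) / \<beta>"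
proof -
  define A where "A = (\<Sum>t\<in>{t0..T}. \<alpha> t * \<rho>^(t-t0))"
  define Bs where "Bs = (\<Sum>t\<in>{t0..T}. (\<Sum>s\<in>{t0..<t}. \<alpha> t * (\<rho>^(t-1-s) * bb s)))"
  have S1: "(\<Sum>t\<in>{t0..T}. \<alpha> t * sp t) \<le> (A * sp t0 + 2 * Bs) / \<beta>"
  proof -
    have "(\<Sum>t\<in>{t0..T}. \<alpha> t * sp t) \<le>
      (\<Sum>t\<in>{t0..T}. (\<alpha> t * \<rho>^(t-t0) * sp t0) / \<beta> + 2 * (\<Sum>s\<in>{t0..<t}. \<alpha> t * (\<rho>^(t-1-s) * bb s)) / \<beta>)"
    proof (rule sum_mono)
      fix t assume "t \<in> {t0..T}"
      then have "\<alpha> t * sp t \<le> \<alpha> t * ((\<rho>^(t-t0) * sp t0 + 2 * (\<Sum>s\<in>{t0..<t}. \<rho>^(t-1-s) * bb s)) / \<beta>)"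
        using spb[of t] al(1)[of t] by (intro mult_left_mono) auto
      also have "\<dots> = (\<alpha> t * \<rho>^(t-t0) * sp t0) / \<beta> + 2 * (\<alpha> t * (\<Sum>s\<in>{t0..<t}. \<rho>^(t-1-s) * bb s)) / \<beta>"
        by (rule aux_eq)
      also have "\<alpha> t * (\<Sum>s\<in>{t0..<t}. \<rho>^(t-1-s) * bb s) = (\<Sum>s\<in>{t0..<t}. \<alpha> t * (\<rho>^(t-1-s) * bb s))"
        by (rule sum_distrib_left)
      finally show "\<alpha> t * sp t \<le> (\<alpha> t * \<rho>^(t-t0) * sp t0) / \<beta> + 2 * (\<Sum>s\<in>{t0..<t}. \<alpha> t * (\<rho>^(t-1-s) * bb s)) / \<beta>" .
    qed
    also have "\<dots> = (\<Sum>t\<in>{t0..T}. (\<alpha> t * \<rho>^(t-t0) * sp t0)) / \<beta> + 2 * Bs / \<beta>"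
      unfolding Bs_def by (simp add: sum.distrib sum_divide_distrib sum_distrib_left)
    also have "(\<Sum>t\<in>{t0..T}. (\<alpha> t * \<rho>^(t-t0) * sp t0)) = A * sp t0"
      unfolding A_def by (simp add: sum_distrib_right)
    finally show ?thesis by (simp add: add_divide_distrib)
  qed
  have S2: "A \<le> \<alpha> t0 / (1 - \<rho>)"
  proof -
    have "A \<le> (\<Sum>t\<in>{t0..T}. \<alpha> t0 * \<rho>^(t-t0))"
      unfolding A_def
    proof (rule sum_mono)
      fix t assume "t \<in> {t0..T}"
      then have "\<alpha> t \<le> \<alpha> t0" using al(2)[of t0 t] by simp
      then show "\<alpha> t * \<rho>^(t-t0) \<le> \<alpha> t0 * \<rho>^(t-t0)" using rho by (intro mult_right_mono) auto
    qed
    also have "\<dots> = \<alpha> t0 * (\<Sum>t\<in>{t0..T}. \<rho>^(t-t0))" by (simp add: sum_distrib_left)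
    also have "\<dots> \<le> \<alpha> t0 * (1 / (1 - \<rho>))"
    proof -
      have g: "(\<Sum>t\<in>{t0..T}. \<rho>^(t-t0)) \<le> 1 / (1 - \<rho>)"
        by (rule geo_sub[OF rho]) auto
      show ?thesis using mult_left_mono[OF g al(1)[of t0]] .
    qed
    finally show ?thesis by simp
  qed
  have S3: "Bs \<le> (\<Sum>s\<in>{t0..T}. \<alpha> s * bb s) / (1 - \<rho>)"
  proof -
    have "Bs = (\<Sum>t\<in>{t0..T}. (\<Sum>s\<in>{s\<in>{t0..T}. s < t}. \<alpha> t * (\<rho>^(t-1-s) * bb s)))"
      unfolding Bs_def
    proof (rule sum.cong)
      fix t assume "t \<in> {t0..T}"
      then have "{t0..<t} = {s\<in>{t0..T}. s < t}" by auto
      then show "(\<Sum>s\<in>{t0..<t}. \<alpha> t * (\<rho>^(t-1-s) * bb s)) = (\<Sum>s\<in>{s\<in>{t0..T}. s < t}. \<alpha> t * (\<rho>^(t-1-s) * bb s))"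
        by simp
    qed simp
    also have "\<dots> = (\<Sum>s\<in>{t0..T}. (\<Sum>t | t \<in> {t0..T} \<and> s < t. \<alpha> t * (\<rho>^(t-1-s) * bb s)))"
      by (rule sum.swap_restrict) auto
    also have "\<dots> \<le> (\<Sum>s\<in>{t0..T}. \<alpha> s * bb s / (1 - \<rho>))"
    proof (rule sum_mono)
      fix s assume "s \<in> {t0..T}"
      have "(\<Sum>t | t \<in> {t0..T} \<and> s < t. \<alpha> t * (\<rho>^(t-1-s) * bb s))
          \<le> (\<Sum>t | t \<in> {t0..T} \<and> s < t. \<alpha> s * bb s * \<rho>^(t-Suc s))"
      proof (rule sum_mono)
        fix t assume "t \<in> {t. t \<in> {t0..T} \<and> s < t}"
        then have "\<alpha> t \<le> \<alpha> s" using al(2)[of s t] by auto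
        then have "\<alpha> t * (\<rho>^(t-Suc s) * bb s) \<le> \<alpha> s * (\<rho>^(t-Suc s) * bb s)"
          using rho bb by (intro mult_right_mono) auto
        then show "\<alpha> t * (\<rho>^(t-1-s) * bb s) \<le> \<alpha> s * bb s * \<rho>^(t-Suc s)"
          by (simp add: mult.commute mult.left_commute)
      qed
      also have "\<dots> = \<alpha> s * bb s * (\<Sum>t | t \<in> {t0..T} \<and> s < t. \<rho>^(t-Suc s))"
        by (simp add: sum_distrib_left)
      also have "\<dots> \<le> \<alpha> s * bb s * (1 / (1 - \<rho>))"
      proof -
        have g: "(\<Sum>t | t \<in> {t0..T} \<and> s < t. \<rho>^(t-Suc s)) \<le> 1 / (1 - \<rho>)"
          by (rule geo_sub[OF rho]) auto
        have "0 \<le> \<alpha> s * bb s" using al(1)[of s] bb[of s] by simp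
        from mult_left_mono[OF g this] show ?thesis .
      qed
      finally show "(\<Sum>t | t \<in> {t0..T} \<and> s < t. \<alpha> t * (\<rho>^(t-1-s) * bb s)) \<le> \<alpha> s * bb s / (1 - \<rho>)"
        by simp
    qed
    also have "\<dots> = (\<Sum>s\<in>{t0..T}. \<alpha> s * bb s) / (1 - \<rho>)" by (simp add: sum_divide_distrib)
    finally show ?thesis .
  qed
  have "A * sp t0 \<le> \<alpha> t0 / (1 - \<rho>) * sp t0" using S2 sp0 by (rule mult_right_mono)
  moreover have "2 * Bs \<le> 2 / (1 - \<rho>) * (\<Sum>s\<in>{t0..T}. \<alpha> s * bb s)" using S3 by simp
  ultimately have "(A * sp t0 + 2 * Bs) / \<beta> \<le> (\<alpha> t0 / (1 - \<rho>) * sp t0 + 2 / (1 - \<rho>) * (\<Sum>s\<in>{t0..T}. \<alpha> s * bb s)) / \<beta>"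
    using b by (intro divide_right_mono) auto
  then show ?thesis using S1 by simp
qed


primrec trj :: "(nat \<Rightarrow> 'm \<Rightarrow> 'm \<Rightarrow> real) \<Rightarrow> nat \<Rightarrow> ('m::finite \<Rightarrow> real) \<Rightarrow> nat \<Rightarrow> 'm \<Rightarrow> real" where
  "trj a s z 0 = z"
| "trj a s z (Suc k) = (\<lambda>i. \<Sum>j\<in>UNIV. a (s+k) i j * trj a s z k j)"

lemma trj_lin: "trj a s (\<lambda>i. \<Sum>l\<in>UNIV. c l * z l i) k i = (\<Sum>l\<in>UNIV. c l * trj a s (z l) k i)"
proof (induction k arbitrary: i)
  case 0 show ?case by simp
next
  case (Suc k)
  have "trj a s (\<lambda>i. \<Sum>l\<in>UNIV. c l * z l i) (Suc k) i
      = (\<Sum>j\<in>UNIV. a (s+k) i j * (\<Sum>l\<in>UNIV. c l * trj a s (z l) k j))"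
    by (simp add: Suc.IH)
  also have "\<dots> = (\<Sum>l\<in>UNIV. c l * (\<Sum>j\<in>UNIV. a (s+k) i j * trj a s (z l) k j))"
    unfolding sum_distrib_left by (subst sum.swap) (simp add: mult_ac)
  finally show ?case by simp
qed

lemma trj_shift: "trj a s z (Suc k) = trj a (Suc s) (\<lambda>i. \<Sum>j\<in>UNIV. a s i j * z j) k"
  by (induction k) simp_all

definition ind :: "'m \<Rightarrow> 'm \<Rightarrow> real" where "ind j = (\<lambda>i. if i = j then 1 else 0)"

lemma sum_ind1: fixes j :: "'m::finite" shows "(\<Sum>j'\<in>UNIV. f j' * ind j j') = (f j :: real)"
proof -
  have "(\<Sum>j'\<in>UNIV. f j' * ind j j') = (\<Sum>j'\<in>UNIV. if j' = j then f j' else 0)"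
    by (rule sum.cong) (auto simp: ind_def)
  then show ?thesis by simp
qed

lemma sum_ind2: fixes i :: "'m::finite" shows "(\<Sum>l\<in>UNIV. f l * ind l i) = (f i :: real)"
proof -
  have "(\<Sum>l\<in>UNIV. f l * ind l i) = (\<Sum>l\<in>UNIV. if l = i then f l else 0)"
    by (rule sum.cong) (auto simp: ind_def)
  then show ?thesis by simp
qed

lemma conv_common:
  fixes y :: "nat \<Rightarrow> 'm::finite \<Rightarrow> real"
  assumes bnd: "\<And>k n i. mn (y k) \<le> y (k+n) i \<and> y (k+n) i \<le> mx (y k)"
    and sp: "(\<lambda>k. mx (y k) - mn (y k)) \<longlonglongrightarrow> 0"
  shows "\<exists>l. \<forall>i. (\<lambda>k. y k i) \<longlonglongrightarrow> l"
proof -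
  have dec: "antimono_on UNIV (\<lambda>k. mx (y k))"
  proof (rule antimonoI)
    fix k k' :: nat assume "k \<le> k'"
    then obtain n where "k' = k + n" using le_Suc_ex by blast
    then show "mx (y k') \<le> mx (y k)" using bnd by (auto intro: mx_le)
  qed
  have lb: "\<forall>k. mn (y 0) \<le> mx (y k)"
    using bnd[of 0] mx_ge order_trans by (metis add_0)
  obtain l where l: "(\<lambda>k. mx (y k)) \<longlonglongrightarrow> l" using decseq_convergent[OF dec lb] by blast
  have "(\<lambda>k. mx (y k) - (mx (y k) - mn (y k))) \<longlonglongrightarrow> l - 0"
    by (intro tendsto_diff l sp)
  then have mnl: "(\<lambda>k. mn (y k)) \<longlonglongrightarrow> l" by simp
  have "(\<lambda>k. y k i) \<longlonglongrightarrow> l" for i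
    by (rule tendsto_sandwich[OF _ _ mnl l]) (auto simp: mn_le mx_ge)
  then show ?thesis by blast
qed

context cons
begin

lemma shift: "cons (\<lambda>k. E (s+k)) (\<lambda>k. a (s+k)) \<gamma> S"
proof
  show "weight_rules (\<lambda>k. E (s + k)) (\<lambda>k. a (s + k)) \<gamma>"
    using wr unfolding weight_rules_def by blast
  show "0 < S" by (rule Spos)
  fix t
  have "(\<lambda>k. E (s+k)) ` {t..<t+S} = E ` {t+s..<t+s+S}"
  proof (intro subset_antisym subsetI)
    fix x assume "x \<in> (\<lambda>k. E (s+k)) ` {t..<t+S}" then show "x \<in> E ` {t+s..<t+s+S}" by auto
  next
    fix x assume "x \<in> E ` {t+s..<t+s+S}"
    then obtain k' where k': "k' \<in> {t+s..<t+s+S}" "x = E k'" by blast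
    then have "x = E (s + (k' - s))" "k' - s \<in> {t..<t+S}" by auto
    then show "x \<in> (\<lambda>k. E (s+k)) ` {t..<t+S}" by blast
  qed
  then show "strongly_connected (\<Union>k\<in>{t..<t+S}. E (s+k))"
    using sc[of "t+s"] by simp
qed

lemma trj_rec: "trj a s z (Suc k) i = (\<Sum>j\<in>UNIV. a (s+k) i j * trj a s z k j) + 0"
  by simp

lemma trj_bnd: "mn (trj a s z k) \<le> trj a s z (k+n) i \<and> trj a s z (k+n) i \<le> mx (trj a s z k)"
proof -
  interpret sh: cons "\<lambda>k. E (s+k)" "\<lambda>k. a (s+k)" \<gamma> S by (rule shift)
  have r: "\<And>k i. trj a s z (Suc k) i = (\<Sum>j\<in>UNIV. a (s+k) i j * trj a s z k j) + 0" by simp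
  have e: "\<And>s i. \<bar>(0::real)\<bar> \<le> 0" by simp
  note w = sh.window_spread[of "trj a s z" "\<lambda>_ _. 0" "\<lambda>_. 0", OF r e]
  note lo = sh.lower_all[of "trj a s z" "\<lambda>_ _. 0" "\<lambda>_. 0", OF r e]
  have r': "\<And>k i. - trj a s z (Suc k) i = (\<Sum>j\<in>UNIV. a (s+k) i j * - trj a s z k j) + 0"
    by (simp add: sum_negf)
  have hi: "- trj a s z (k+n) i \<ge> mn (\<lambda>i. - trj a s z k i)"
    using sh.lower_all[of "\<lambda>k i. - trj a s z k i" "\<lambda>_ _. 0" "\<lambda>_. 0", OF r' e, of k n i] by simp
  show ?thesis using lo[of k n i] hi mn_neg[of "trj a s z k"] by simp
qed

lemma trj_win: "mx (trj a s z (k + CARD('m)*S)) - mn (trj a s z (k + CARD('m)*S))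
   \<le> (1 - \<gamma>^(CARD('m)*S)) * (mx (trj a s z k) - mn (trj a s z k))"
proof -
  interpret sh: cons "\<lambda>k. E (s+k)" "\<lambda>k. a (s+k)" \<gamma> S by (rule shift)
  have r: "\<And>k i. trj a s z (Suc k) i = (\<Sum>j\<in>UNIV. a (s+k) i j * trj a s z k j) + 0" by simp
  have e: "\<And>s i. \<bar>(0::real)\<bar> \<le> 0" by simp
  show ?thesis using sh.window_spread(1)[of "trj a s z" "\<lambda>_ _. 0" "\<lambda>_. 0", OF r e, of k] by simp
qed

lemma trj_low: "trj a s z (CARD('m)*S) i \<ge> mn z + \<gamma>^(CARD('m)*S) * (z j - mn z)"
proof -
  interpret sh: cons "\<lambda>k. E (s+k)" "\<lambda>k. a (s+k)" \<gamma> S by (rule shift)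
  have r: "\<And>k i. trj a s z (Suc k) i = (\<Sum>j\<in>UNIV. a (s+k) i j * trj a s z k j) + 0" by simp
  have e: "\<And>s i. \<bar>(0::real)\<bar> \<le> 0" by simp
  show ?thesis using sh.window_lower[of "trj a s z" "\<lambda>_ _. 0" "\<lambda>_. 0", OF r e, where t=0 and k=j and i=i] by simp
qed

lemma beta: "0 < 1 - \<gamma>^(CARD('m)*S)" "1 - \<gamma>^(CARD('m)*S) < 1"
proof -
  have "\<gamma>^(CARD('m)*S) < 1" using gam by (simp add: power_less_one_iff Spos)
  moreover have "\<gamma>^(CARD('m)*S) > 0" using gam by simp
  ultimately show "0 < 1 - \<gamma>^(CARD('m)*S)" "1 - \<gamma>^(CARD('m)*S) < 1" by auto
qed

lemma trj_conv: "\<exists>l. \<forall>i. (\<lambda>k. trj a s z k i) \<longlonglongrightarrow> l"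
proof (rule conv_common)
  show "mn (trj a s z k) \<le> trj a s z (k+n) i \<and> trj a s z (k+n) i \<le> mx (trj a s z k)" for k n i
    by (rule trj_bnd)
  define sp where "sp k = mx (trj a s z k) - mn (trj a s z k)" for k
  define \<beta> where "\<beta> = 1 - \<gamma>^(CARD('m)*S)"
  have sp0: "sp k \<ge> 0" for k unfolding sp_def using mn_le[of "trj a s z k"] mx_ge[of "trj a s z k"] by (meson order_trans diff_ge_0_iff_ge)
  have dec: "antimono_on UNIV sp"
  proof (rule antimonoI)
    fix k k' :: nat assume "k \<le> k'"
    then obtain n where n: "k' = k + n" using le_Suc_ex by blast
    have "mx (trj a s z k') \<le> mx (trj a s z k)" using trj_bnd[where s=s and z=z and k=k and n=n] n by (auto intro: mx_le)
    moreover have "mn (trj a s z k') \<ge> mn (trj a s z k)" using trj_bnd[where s=s and z=z and k=k and n=n] n by (auto intro: mn_ge)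
    ultimately show "sp k' \<le> sp k" unfolding sp_def by simp
  qed
  obtain l where l: "sp \<longlonglongrightarrow> l" and lb: "\<forall>i. l \<le> sp i"
    using decseq_convergent[OF dec, of 0] sp0 by blast
  have l1: "(\<lambda>k. sp (k + CARD('m)*S)) \<longlonglongrightarrow> l" by (rule LIMSEQ_ignore_initial_segment[OF l])
  have l2: "(\<lambda>k. \<beta> * sp k) \<longlonglongrightarrow> \<beta> * l" by (intro tendsto_mult_left l)
  have "l \<le> \<beta> * l"
    by (rule LIMSEQ_le[OF l1 l2]) (use trj_win in \<open>auto simp: sp_def \<beta>_def\<close>)
  moreover have "l \<ge> 0" using lb sp0 l by (meson LIMSEQ_le_const)
  ultimately have "l = 0" using beta unfolding \<beta>_def by (smt (verit) mult_le_cancel_right1)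
  then show "(\<lambda>k. mx (trj a s z k) - mn (trj a s z k)) \<longlonglongrightarrow> 0" using l unfolding sp_def by simp
qed

definition phi :: "nat \<Rightarrow> 'm \<Rightarrow> real" where
  "phi s j = lim (\<lambda>k. trj a s (ind j) k undefined)"

lemma phi_tendsto: "(\<lambda>k. trj a s (ind j) k i) \<longlonglongrightarrow> phi s j"
proof -
  obtain l where l: "\<forall>i. (\<lambda>k. trj a s (ind j) k i) \<longlonglongrightarrow> l" using trj_conv by blast
  then have "phi s j = l" unfolding phi_def by (simp add: limI)
  then show ?thesis using l by simp
qed

lemma trj_one: "trj a s (\<lambda>_. 1) k i = 1"
  by (induction k arbitrary: i) (simp_all add: a_sum sum_distrib_left[symmetric])

lemma phi_sum: "(\<Sum>j\<in>UNIV. phi s j) = 1"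
proof -
  obtain i :: 'm where True by blast
  have lim1: "(\<lambda>k. \<Sum>j\<in>UNIV. trj a s (ind j) k i) \<longlonglongrightarrow> (\<Sum>j\<in>UNIV. phi s j)"
    by (intro tendsto_sum phi_tendsto)
  have eqk: "(\<Sum>j\<in>UNIV. trj a s (ind j) k i) = 1" for k
  proof -
    have "(\<Sum>j\<in>UNIV. trj a s (ind j) k i) = (\<Sum>j\<in>UNIV. 1 * trj a s (ind j) k i)" by simp
    also have "\<dots> = trj a s (\<lambda>i. \<Sum>l\<in>UNIV. 1 * ind l i) k i" by (rule trj_lin[symmetric])
    also have "(\<lambda>i::'m. \<Sum>l\<in>UNIV. 1 * ind l i) = (\<lambda>_. 1)"
    proof (rule ext)
      fix i :: 'm
      show "(\<Sum>l\<in>UNIV. 1 * ind l i) = 1" by (rule sum_ind2)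
    qed
    also have "trj a s (\<lambda>_. 1) k i = 1" by (rule trj_one)
    finally show ?thesis .
  qed
  have "(\<lambda>k. \<Sum>j\<in>UNIV. trj a s (ind j) k i) = (\<lambda>k. 1)" using eqk by (rule ext)
  then have "(\<lambda>k. 1::real) \<longlonglongrightarrow> (\<Sum>j\<in>UNIV. phi s j)" using lim1 by simp
  from LIMSEQ_unique[OF tendsto_const this] show ?thesis by simp
qed

lemma phi_lower: "phi s j \<ge> \<gamma>^(CARD('m)*S)"
proof -
  define L where "L = CARD('m)*S"
  have m0: "0 \<le> mn (ind j)" by (rule mn_ge) (simp add: ind_def)
  have m1: "mn (ind j) \<le> 1" using mn_le[of "ind j" j] by (simp add: ind_def)
  have g0: "0 \<le> \<gamma>^L" "\<gamma>^L \<le> 1" using gam by (auto simp: power_le_one)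
  have "trj a s (ind j) L i' \<ge> \<gamma>^L" for i'
  proof -
    have "trj a s (ind j) L i' \<ge> mn (ind j) + \<gamma>^L * (ind j j - mn (ind j))"
      using trj_low[where s=s and z="ind j" and i=i' and j=j] unfolding L_def by simp
    moreover have "mn (ind j) + \<gamma>^L * (ind j j - mn (ind j)) = \<gamma>^L + mn (ind j) * (1 - \<gamma>^L)"
      by (simp add: ind_def algebra_simps)
    moreover have "mn (ind j) * (1 - \<gamma>^L) \<ge> 0" using m0 g0 by simp
    ultimately show ?thesis by linarith
  qed
  then have "mn (trj a s (ind j) L) \<ge> \<gamma>^L" by (rule mn_ge)
  then have "\<forall>n\<ge>L. \<gamma>^L \<le> trj a s (ind j) n undefined"
    using trj_bnd[of s "ind j" L] by (metis le_Suc_ex order_trans)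
  then show ?thesis unfolding L_def[symmetric]
    by (intro LIMSEQ_le_const[OF phi_tendsto]) blast
qed

lemma phi_nonneg: "phi s j \<ge> 0"
  using phi_lower[of s j] gam by (smt (verit) zero_le_power)

lemma phi_rec: "phi s j = (\<Sum>l\<in>UNIV. a s l j * phi (Suc s) l)"
proof -
  obtain i :: 'm where True by blast
  have eq: "trj a s (ind j) (Suc k) i = (\<Sum>l\<in>UNIV. a s l j * trj a (Suc s) (ind l) k i)" for k
  proof -
    have "trj a s (ind j) (Suc k) i = trj a (Suc s) (\<lambda>i. \<Sum>j'\<in>UNIV. a s i j' * ind j j') k i"
      by (subst trj_shift) (rule refl)
    also have "(\<lambda>i. \<Sum>j'\<in>UNIV. a s i j' * ind j j') = (\<lambda>i. \<Sum>l\<in>UNIV. a s l j * ind l i)"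
      by (rule ext) (simp only: sum_ind1 sum_ind2[of "\<lambda>l. a s l j"])
    also have "trj a (Suc s) (\<lambda>i. \<Sum>l\<in>UNIV. a s l j * ind l i) k i = (\<Sum>l\<in>UNIV. a s l j * trj a (Suc s) (ind l) k i)"
      by (rule trj_lin)
    finally show ?thesis .
  qed
  have "(\<lambda>k. trj a s (ind j) (Suc k) i) \<longlonglongrightarrow> phi s j" using LIMSEQ_Suc[OF phi_tendsto] .
  moreover have "(\<lambda>k. trj a s (ind j) (Suc k) i) \<longlonglongrightarrow> (\<Sum>l\<in>UNIV. a s l j * phi (Suc s) l)"
    unfolding eq by (intro tendsto_sum tendsto_mult_left phi_tendsto)
  ultimately show ?thesis by (rule LIMSEQ_unique)
qed

end


lemma f0_eq: "f0 (\<theta> :: (real^'n) \<times> (real^'m::finite)) = (\<Sum>j\<in>UNIV. snd \<theta> $ j) / real CARD('m)"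
proof -
  obtain x u where th: "\<theta> = (x, u)" by (cases \<theta>)
  have "f0 \<theta> = (\<Sum>j\<in>UNIV. (1 / real CARD('m)) * u $ j)"
    unfolding f0_def cvec_def th by (simp add: inner_Pair inner_vec_def)
  also have "\<dots> = (\<Sum>j\<in>UNIV. u $ j) / real CARD('m)"
    by (simp add: sum_divide_distrib)
  finally show ?thesis using th by simp
qed

lemma f0_linear:
  "f0 (x + y) = f0 x + f0 y" "f0 (r *\<^sub>R x) = r * f0 x" "f0 (x - y) = f0 x - f0 y"
  "f0 (\<Sum>i\<in>A. F i) = (\<Sum>i\<in>A. f0 (F i))"
  unfolding f0_def by (simp_all add: inner_add_right inner_diff_right inner_sum_right)

locale prob =
  fixes X :: "(real^'n) set"
    and f :: "'m::finite \<Rightarrow> real^'n \<Rightarrow> real"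
    and g :: "'m \<Rightarrow> real^'n \<Rightarrow> real \<Rightarrow> real"
    and Y Yk :: "'m \<Rightarrow> real set"
    and eps :: "'m \<Rightarrow> real"
  assumes X: "X \<noteq> {}" "compact X" "convex X"
    and f_convex: "\<And>i. convex_on UNIV (f i)"
    and g_convex: "\<And>i y. y \<in> Y i \<Longrightarrow> convex_on UNIV (\<lambda>x. g i x y)"
    and Yk: "\<And>i. finite (Yk i)" "\<And>i. Yk i \<subseteq> Y i"
    and eps: "\<And>i. eps i > 0"
    and feasible: "\<exists>x\<in>X. \<forall>i. \<forall>y\<in>Yk i. g i x y \<le> - eps i"
    and interior: "\<exists>x\<in>X. \<forall>i. \<forall>y\<in>Yk i. g i x y < - eps i"
begin

abbreviation "Om i \<equiv> Omega_i X f g Yk eps i"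
abbreviation "OM \<equiv> Omega X f g Yk eps"
abbreviation "fs \<equiv> f0star X f g Yk eps"

lemma fcont: "continuous_on UNIV (f i)"
  by (rule convex_on_continuous[OF open_UNIV f_convex])

lemma gconv: "y \<in> Yk i \<Longrightarrow> convex_on UNIV (\<lambda>x. g i x y)"
  using g_convex Yk(2) by blast

lemma gcont: "y \<in> Yk i \<Longrightarrow> continuous_on UNIV (\<lambda>x. g i x y)"
  by (rule convex_on_continuous[OF open_UNIV gconv])

lemma Om_closed: "closed (Om i)"
proof -
  have "Om i = (X \<times> UNIV) \<inter> {\<theta>. f i (fst \<theta>) - snd \<theta> $ i \<le> 0} \<inter>
      (\<Inter>y\<in>Yk i. {\<theta>. g i (fst \<theta>) y \<le> - eps i})"
    unfolding Omega_i_def by auto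
  moreover have "closed (X \<times> (UNIV :: (real^'m) set))" using X(2) by (simp add: closed_Times compact_imp_closed)
  moreover have "closed {\<theta> :: (real^'n) \<times> (real^'m). f i (fst \<theta>) - snd \<theta> $ i \<le> 0}"
    by (intro closed_Collect_le continuous_intros continuous_on_compose2[OF fcont]) auto
  moreover have "closed {\<theta> :: (real^'n) \<times> (real^'m). g i (fst \<theta>) y \<le> - eps i}" if "y \<in> Yk i" for y
    by (intro closed_Collect_le continuous_intros continuous_on_compose2[OF gcont[OF that]]) auto
  ultimately show ?thesis by (auto intro!: closed_Int closed_INT)
qed

lemma Om_convex: "convex (Om i)"
proof (rule convexI)
  fix a b :: "(real^'n) \<times> (real^'m)" and u v :: real
  assume a: "a \<in> Om i" and b: "b \<in> Om i" and uv: "0 \<le> u" "0 \<le> v" "u + v = 1"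
  have v: "v = 1 - u" using uv by simp
  have u1: "u \<le> 1" using uv by simp
  have fx: "fst (u *\<^sub>R a + v *\<^sub>R b) = (1 - v) *\<^sub>R fst a + v *\<^sub>R fst b" using uv by simp
  have "fst (u *\<^sub>R a + v *\<^sub>R b) \<in> X"
    using a b uv X(3) unfolding Omega_i_def by (auto simp: convex_def)
  moreover have "f i (fst (u *\<^sub>R a + v *\<^sub>R b)) \<le> u * (snd a $ i) + v * (snd b $ i)"
  proof -
    have F1: "f i (fst (u *\<^sub>R a + v *\<^sub>R b)) \<le> (1 - v) * f i (fst a) + v * f i (fst b)"
      unfolding fx by (rule convex_onD[OF f_convex]) (use uv in auto)
    have F2: "(1 - v) * f i (fst a) + v * f i (fst b) \<le> (1 - v) * (snd a $ i) + v * (snd b $ i)"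
      using a b uv unfolding Omega_i_def by (auto intro!: add_mono mult_left_mono)
    have "f i (fst (u *\<^sub>R a + v *\<^sub>R b)) \<le> (1 - v) * (snd a $ i) + v * (snd b $ i)"
      using F1 F2 by linarith
    then show ?thesis using v by simp
  qed
  moreover have "g i (fst (u *\<^sub>R a + v *\<^sub>R b)) y \<le> - eps i" if y: "y \<in> Yk i" for y
  proof -
    have "g i (fst (u *\<^sub>R a + v *\<^sub>R b)) y \<le> (1 - v) * g i (fst a) y + v * g i (fst b) y"
      unfolding fx by (rule convex_onD[OF gconv[OF y]]) (use uv in auto)
    also have "\<dots> \<le> (1 - v) * (- eps i) + v * (- eps i)"
    proof -
      have "g i (fst a) y \<le> - eps i" "g i (fst b) y \<le> - eps i" using a b y unfolding Omega_i_def by auto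
      then show ?thesis using uv by (intro add_mono mult_left_mono) auto
    qed
    finally show ?thesis by (simp add: algebra_simps)
  qed
  ultimately show "u *\<^sub>R a + v *\<^sub>R b \<in> Om i"
    unfolding Omega_i_def by simp
qed

definition K where "K = {x\<in>X. \<forall>j. \<forall>y\<in>Yk j. g j x y \<le> - eps j}"

lemma K_compact: "compact K"
proof -
  have "K = X \<inter> (\<Inter>j. \<Inter>y\<in>Yk j. {x. g j x y \<le> - eps j})" unfolding K_def by auto
  moreover have "closed (\<Inter>j. \<Inter>y\<in>Yk j. {x. g j x y \<le> - eps j})"
    by (intro closed_INT ballI closed_Collect_le gcont continuous_on_const)
  ultimately show ?thesis using X(2) by (simp add: compact_Int_closed)
qed

lemma K_ne: "K \<noteq> {}" using feasible unfolding K_def by auto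

lemma in_OM: "x \<in> K \<Longrightarrow> (x, \<chi> j. f j x) \<in> OM"
  unfolding K_def Omega_def Omega_i_def by auto

lemma OM_K: "\<theta> \<in> OM \<Longrightarrow> fst \<theta> \<in> K \<and> (\<forall>j. f j (fst \<theta>) \<le> snd \<theta> $ j)"
  unfolding K_def Omega_def Omega_i_def by auto

lemma OM_sub: "OM \<subseteq> Om i" unfolding Omega_def by auto

lemma minimizer: "\<exists>\<theta>s\<in>OM. f0 \<theta>s = fs \<and> (\<forall>\<theta>\<in>OM. fs \<le> f0 \<theta>)"
proof -
  have "continuous_on K (\<lambda>x. \<Sum>j\<in>UNIV. f j x)"
    by (intro continuous_on_sum continuous_on_subset[OF fcont]) auto
  then obtain xs where xs: "xs \<in> K" "\<And>y. y \<in> K \<Longrightarrow> (\<Sum>j\<in>UNIV. f j xs) \<le> (\<Sum>j\<in>UNIV. f j y)"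
    using continuous_attains_inf[OF K_compact K_ne] by blast
  define \<theta>s where "\<theta>s = (xs, \<chi> j. f j xs)"
  have mem: "\<theta>s \<in> OM" unfolding \<theta>s_def by (rule in_OM[OF xs(1)])
  have le: "f0 \<theta>s \<le> f0 \<theta>" if "\<theta> \<in> OM" for \<theta>
  proof -
    have "(\<Sum>j\<in>UNIV. f j xs) \<le> (\<Sum>j\<in>UNIV. f j (fst \<theta>))" using xs(2) OM_K[OF that] by blast
    also have "\<dots> \<le> (\<Sum>j\<in>UNIV. snd \<theta> $ j)" using OM_K[OF that] by (intro sum_mono) auto
    finally show ?thesis unfolding f0_eq \<theta>s_def by (simp add: divide_right_mono)
  qed
  have "fs = f0 \<theta>s" unfolding f0star_def
    by (rule cInf_eq_minimum) (use mem le in auto)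
  then show ?thesis using mem le by auto
qed

lemma fs_le: "\<theta> \<in> OM \<Longrightarrow> fs \<le> f0 \<theta>"
  using minimizer by blast

lemma slater:
  "\<exists>Cl>0. \<forall>z p \<epsilon>. fst z \<in> X \<longrightarrow> (\<forall>j. p j \<in> Om j) \<longrightarrow> (\<forall>j. norm (z - p j) \<le> \<epsilon>) \<longrightarrow> \<epsilon> > 0
      \<longrightarrow> f0 z - fs \<ge> - Cl * \<epsilon>"
proof -
  obtain xt where xt: "xt \<in> X" "\<And>i y. y \<in> Yk i \<Longrightarrow> g i xt y < - eps i" using interior by blast
  define U where "U = (\<Inter>j. \<Inter>y\<in>Yk j. {x. g j x y < - eps j})"
  have "open (\<Inter>y\<in>Yk j. {x. g j x y < - eps j})" for j
    by (intro open_INT ballI Yk(1) open_Collect_less gcont continuous_on_const)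
  then have "open U" unfolding U_def by (intro open_INT) auto
  moreover have "xt \<in> U" unfolding U_def using xt by auto
  ultimately obtain d where d: "d > 0" "ball xt d \<subseteq> U" using open_contains_ball by blast
  define \<delta> where "\<delta> = d / 2"
  have dl: "\<delta> > 0" using d unfolding \<delta>_def by simp
  have gw: "g j (xt + w) y \<le> - eps j" if "norm w \<le> \<delta>" "y \<in> Yk j" for w j y
  proof -
    have "xt + w \<in> ball xt d" using that d unfolding \<delta>_def by (simp add: dist_norm)
    then show ?thesis using d(2) that unfolding U_def by fastforce
  qed
  have "\<exists>x\<in>cball xt \<delta>. \<forall>y\<in>cball xt \<delta>. f j y \<le> f j x" for j
    by (rule continuous_attains_sup) (use dl in \<open>auto intro: continuous_on_subset[OF fcont]\<close>)
  then have "\<forall>j. \<exists>x. x \<in> cball xt \<delta> \<and> (\<forall>y\<in>cball xt \<delta>. f j y \<le> f j x)" by blast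
  then obtain xm where xm0: "\<forall>j. xm j \<in> cball xt \<delta> \<and> (\<forall>y\<in>cball xt \<delta>. f j y \<le> f j (xm j))"
    using choice[of "\<lambda>j x. x \<in> cball xt \<delta> \<and> (\<forall>y\<in>cball xt \<delta>. f j y \<le> f j x)"] by blast
  have xm: "\<And>j. \<forall>y\<in>cball xt \<delta>. f j y \<le> f j (xm j)" using xm0 by blast
  define B where "B = (\<Sum>j\<in>UNIV. \<bar>f j (xm j)\<bar>)"
  have fw: "f j (xt + w) \<le> B" if "norm w \<le> \<delta>" for w j
  proof -
    have "f j (xt + w) \<le> f j (xm j)" using xm[of j] that by (simp add: dist_norm)
    also have "\<dots> \<le> \<bar>f j (xm j)\<bar>" by simp
    also have "\<dots> \<le> B" unfolding B_def by (rule member_le_sum) auto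
    finally show ?thesis .
  qed
  define Cl where "Cl = (\<bar>fs - B - \<delta>\<bar> + 1) / \<delta>"
  have Cl: "Cl > 0" using dl unfolding Cl_def by (simp add: add_pos_nonneg)
  have main: "f0 z - fs \<ge> - Cl * \<epsilon>"
    if z: "fst z \<in> X" and p: "\<And>j. p j \<in> Om j" and pz: "\<And>j. norm (z - p j) \<le> \<epsilon>" and e: "\<epsilon> > 0" for z p \<epsilon>
  proof -
    define lam where "lam = \<epsilon> / (\<epsilon> + \<delta>)"
    define \<mu> where "\<mu> = \<delta> / (\<epsilon> + \<delta>)"
    have lm: "lam + \<mu> = 1" "0 < lam" "0 < \<mu>" "lam * (\<delta> / \<epsilon>) = \<mu>" "\<mu> * \<epsilon> = lam * \<delta>"
    proof -
      have ed: "\<epsilon> + \<delta> > 0" "\<epsilon> + \<delta> \<noteq> 0" using e dl by auto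
      have "\<delta> * \<delta> + (\<epsilon> * \<epsilon> + \<delta> * (\<epsilon> * 2)) > 0" using e dl by (intro add_pos_pos mult_pos_pos) auto
      then have p2: "\<delta> * \<delta> + (\<epsilon> * \<epsilon> + \<delta> * (\<epsilon> * 2)) \<noteq> 0" by simp
      show "lam + \<mu> = 1" "0 < lam" "0 < \<mu>" "lam * (\<delta> / \<epsilon>) = \<mu>" "\<mu> * \<epsilon> = lam * \<delta>"
        using e dl ed p2 unfolding lam_def \<mu>_def by (simp_all add: field_simps)
    qed
    define x' where "x' = (1 - lam) *\<^sub>R fst z + lam *\<^sub>R xt"
    have x'X: "x' \<in> X" unfolding x'_def using X(3) z xt(1) lm by (auto intro: convexD_alt)
    have dec: "x' = (1 - lam) *\<^sub>R fst (p j) + lam *\<^sub>R (xt + (\<delta> / \<epsilon>) *\<^sub>R (fst z - fst (p j)))" for j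
    proof -
      have m: "1 - lam = \<mu>" using lm(1) by simp
      have A: "lam *\<^sub>R ((\<delta> / \<epsilon>) *\<^sub>R (fst z - fst (p j))) = \<mu> *\<^sub>R (fst z - fst (p j))"
        using lm(4) by (simp only: scaleR_scaleR)
      have "(1 - lam) *\<^sub>R fst (p j) + lam *\<^sub>R (xt + (\<delta> / \<epsilon>) *\<^sub>R (fst z - fst (p j)))
          = \<mu> *\<^sub>R fst (p j) + lam *\<^sub>R xt + \<mu> *\<^sub>R (fst z - fst (p j))"
        unfolding m scaleR_right_distrib A by (simp add: algebra_simps)
      also have "\<dots> = \<mu> *\<^sub>R fst z + lam *\<^sub>R xt" by (simp add: algebra_simps)
      finally show ?thesis unfolding x'_def m by simp
    qed
    have wn: "norm ((\<delta> / \<epsilon>) *\<^sub>R (fst z - fst (p j))) \<le> \<delta>" for j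
    proof -
      have "norm (fst (z - p j)) \<le> norm (z - p j)"
        using norm_fst_le[of "fst (z - p j)" "snd (z - p j)"] by (simp only: prod.collapse)
      then have "norm (fst z - fst (p j)) \<le> norm (z - p j)" by simp
      also have "\<dots> \<le> \<epsilon>" by (rule pz)
      finally have "(\<delta> / \<epsilon>) * norm (fst z - fst (p j)) \<le> (\<delta> / \<epsilon>) * \<epsilon>"
        using dl e by (intro mult_left_mono) auto
      then show ?thesis using e dl by simp
    qed
    have l01: "0 \<le> lam" "lam \<le> 1" using lm by auto
    have gx: "g j x' y \<le> - eps j" if y: "y \<in> Yk j" for j y
    proof -
      have "g j x' y \<le> (1 - lam) * g j (fst (p j)) y + lam * g j (xt + (\<delta> / \<epsilon>) *\<^sub>R (fst z - fst (p j))) y"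
        unfolding dec[of j] by (rule convex_onD[OF gconv[OF y]]) (use l01 in auto)
      also have "\<dots> \<le> (1 - lam) * (- eps j) + lam * (- eps j)"
        using p[of j] y gw[OF wn y] l01 unfolding Omega_i_def by (intro add_mono mult_left_mono) auto
      finally show ?thesis by (simp add: algebra_simps)
    qed
    have fx: "f j x' \<le> (1 - lam) * (snd z $ j) + lam * (B + \<delta>)" for j
    proof -
      have "f j x' \<le> (1 - lam) * f j (fst (p j)) + lam * f j (xt + (\<delta> / \<epsilon>) *\<^sub>R (fst z - fst (p j)))"
        unfolding dec[of j] by (rule convex_onD[OF f_convex]) (use l01 in auto)
      also have "\<dots> \<le> (1 - lam) * (snd z $ j + \<epsilon>) + lam * B"
      proof (intro add_mono mult_left_mono)
        have "snd (p j) $ j - snd z $ j \<le> norm (snd (p j) - snd z)"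
          using component_le_norm_cart[of "snd (p j) - snd z" j] by (simp add: abs_le_iff)
        also have "\<dots> \<le> norm (p j - z)"
        proof -
          have "norm (snd (p j - z)) \<le> norm (p j - z)"
            using norm_snd_le[of "snd (p j - z)" "fst (p j - z)"] by (simp only: prod.collapse)
          then show ?thesis by simp
        qed
        also have "\<dots> \<le> \<epsilon>" using pz[of j] by (simp add: norm_minus_commute)
        finally have "snd (p j) $ j \<le> snd z $ j + \<epsilon>" by simp
        then show "f j (fst (p j)) \<le> snd z $ j + \<epsilon>" using p[of j] unfolding Omega_i_def by auto
        show "f j (xt + (\<delta> / \<epsilon>) *\<^sub>R (fst z - fst (p j))) \<le> B" by (rule fw[OF wn])
      qed (use l01 in auto)
      also have "\<dots> = (1 - lam) * (snd z $ j) + lam * (B + \<delta>)"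
      proof -
        have mu: "\<mu> = 1 - lam" using lm(1) by simp
        have "\<epsilon> * \<mu> = \<epsilon> - \<epsilon> * lam" unfolding mu by (simp add: right_diff_distrib)
        then have "(1 - lam) * \<epsilon> = lam * \<delta>" using lm(5) by (simp add: algebra_simps)
        then show ?thesis by (simp add: algebra_simps)
      qed
      finally show ?thesis .
    qed
    have "x' \<in> K" unfolding K_def using x'X gx by auto
    then have "fs \<le> f0 (x', \<chi> j. f j x')" by (intro fs_le in_OM)
    also have "f0 (x', \<chi> j. f j x') = (\<Sum>j\<in>UNIV. f j x') / real CARD('m)" by (simp add: f0_eq)
    also have "\<dots> \<le> (\<Sum>j\<in>UNIV. (1 - lam) * (snd z $ j) + lam * (B + \<delta>)) / real CARD('m)"
      by (intro divide_right_mono sum_mono fx) auto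
    also have "\<dots> = (1 - lam) * f0 z + lam * (B + \<delta>)"
      by (simp add: f0_eq sum.distrib sum_distrib_left[symmetric] add_divide_distrib)
    finally have "fs \<le> (1 - lam) * f0 z + lam * (B + \<delta>)" .
    then have "(1 - lam) * (f0 z - fs) \<ge> lam * (fs - B - \<delta>)" by (simp add: algebra_simps)
    moreover have mu: "\<mu> = 1 - lam" using lm(1) by simp
    ultimately have "\<mu> * (f0 z - fs) \<ge> lam * (fs - B - \<delta>)" by simp
    then have "f0 z - fs \<ge> (lam / \<mu>) * (fs - B - \<delta>)" using lm(3)
      by (simp add: field_simps)
    moreover have "lam / \<mu> = \<epsilon> / \<delta>"
    proof -
      have "lam / \<mu> = lam / (lam * (\<delta> / \<epsilon>))" using lm(4) by simp
      also have "\<dots> = \<epsilon> / \<delta>" using lm(2) e dl by (simp add: field_simps)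
      finally show ?thesis .
    qed
    moreover have "(\<epsilon> / \<delta>) * (fs - B - \<delta>) \<ge> - Cl * \<epsilon>"
    proof -
      have c0: "\<epsilon> / \<delta> \<ge> 0" using e dl by simp
      have "- \<bar>fs - B - \<delta>\<bar> \<le> fs - B - \<delta>" by simp
      from mult_left_mono[OF this c0]
      have "(\<epsilon> / \<delta>) * (fs - B - \<delta>) \<ge> - (\<epsilon> / \<delta>) * \<bar>fs - B - \<delta>\<bar>" by simp
      moreover have "(\<epsilon> / \<delta>) * \<bar>fs - B - \<delta>\<bar> \<le> Cl * \<epsilon>"
        unfolding Cl_def using e dl by (simp add: field_simps)
      ultimately show ?thesis by (smt (verit) mult_minus_left)
    qed
    ultimately show ?thesis by (metis order_trans)
  qed
  show ?thesis using Cl main by blast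
qed

end


lemma assemble:
  fixes p Cl K0 K1 V1 c2 Ce A2 Rs Fs Ds Sb :: real
  assumes p: "p > 0" and Cl: "Cl > 0" and K1: "K1 > 0"
   and I: "2*Fs + p*Rs \<le> V1 + c2*A2"
   and II: "Fs \<ge> -Cl*Ds" and III: "Ds \<le> K0 + K1*Sb"
   and IV: "Sb \<le> Ce*A2 + (p/(4*Cl*K1))*Rs"
  shows "Ds \<le> (K0 + (V1 + 2*Cl*K0)/(2*Cl)) + (K1*Ce + (c2 + 2*Cl*K1*Ce)/(2*Cl)) * A2"
proof -
  have a0: "K1*Sb \<le> K1*(Ce*A2 + (p/(4*Cl*K1))*Rs)" using IV K1 by (intro mult_left_mono) auto
  have a1: "K1*(Ce*A2 + (p/(4*Cl*K1))*Rs) = K1*Ce*A2 + (p/(4*Cl))*Rs" using K1 Cl by (simp add: field_simps)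
  have a: "Ds \<le> K0 + K1*Ce*A2 + (p/(4*Cl))*Rs" using III a0 a1 by linarith
  have b0: "Cl*Ds \<le> Cl*(K0 + K1*Ce*A2 + (p/(4*Cl))*Rs)" using a Cl by (intro mult_left_mono) auto
  have b1: "Cl*(K0 + K1*Ce*A2 + (p/(4*Cl))*Rs) = Cl*K0 + Cl*K1*Ce*A2 + (p/4)*Rs" using Cl by (simp add: field_simps)
  have "-2*Fs \<le> 2*(Cl*Ds)" using II by linarith
  then have b: "(p/2)*Rs \<le> V1 + c2*A2 + 2*(Cl*K0) + 2*(Cl*K1*Ce*A2)" using I b0 b1 by linarith
  have c: "(p/(4*Cl))*Rs \<le> (V1 + c2*A2 + 2*(Cl*K0) + 2*(Cl*K1*Ce*A2)) / (2*Cl)"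
  proof -
    have "(p/(4*Cl))*Rs = ((p/2)*Rs) / (2*Cl)" using Cl by (simp add: field_simps)
    also have "\<dots> \<le> (V1 + c2*A2 + 2*(Cl*K0) + 2*(Cl*K1*Ce*A2)) / (2*Cl)"
      using b Cl by (intro divide_right_mono) auto
    finally show ?thesis .
  qed
  have e: "K0 + K1*Ce*A2 + (V1 + c2*A2 + 2*(Cl*K0) + 2*(Cl*K1*Ce*A2)) / (2*Cl)
      = (K0 + (V1 + 2*Cl*K0)/(2*Cl)) + (K1*Ce + (c2 + 2*Cl*K1*Ce)/(2*Cl)) * A2"
    using Cl by (simp add: field_simps)
  show ?thesis using a c e by linarith
qed

lemma amgm: fixes x y \<eta> :: real assumes "\<eta> > 0" shows "x * y \<le> x\<^sup>2 / (2*\<eta>) + (\<eta>/2) * y\<^sup>2"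
proof -
  have "0 \<le> (x - \<eta> * y)\<^sup>2" by simp
  then have "2 * \<eta> * (x * y) \<le> x\<^sup>2 + \<eta>\<^sup>2 * y\<^sup>2" by (simp add: power2_diff algebra_simps power_mult_distrib)
  then have "(2 * \<eta> * (x * y)) / (2 * \<eta>) \<le> (x\<^sup>2 + \<eta>\<^sup>2 * y\<^sup>2) / (2 * \<eta>)"
    using assms by (intro divide_right_mono) auto
  then show ?thesis using assms by (simp add: field_simps power2_eq_square)
qed

lemma harm_ln: "(\<Sum>t\<in>{1..T}. 1 / (real t + 1)) \<le> ln (real T + 1)"
proof (induction T)
  case 0 then show ?case by simp
next
  case (Suc T)
  have step: "1 / (real T + 2) \<le> ln (real T + 2) - ln (real T + 1)"
  proof -
    have "ln ((real T + 1) / (real T + 2)) \<le> (real T + 1) / (real T + 2) - 1"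
      by (rule ln_le_minus_one) auto
    moreover have "ln ((real T + 1) / (real T + 2)) = ln (real T + 1) - ln (real T + 2)"
      using ln_div[of "real T + 1" "real T + 2"] by simp
    moreover have "(real T + 1) / (real T + 2) - 1 = - (1 / (real T + 2))"
      by (simp add: field_simps)
    ultimately show ?thesis by linarith
  qed
  have "(\<Sum>t\<in>{1..Suc T}. 1 / (real t + 1)) = (\<Sum>t\<in>{1..T}. 1 / (real t + 1)) + 1 / (real T + 2)"
    by (simp add: add.commute)
  also have "\<dots> \<le> ln (real T + 1) + (ln (real T + 2) - ln (real T + 1))" using Suc.IH step by linarith
  finally show ?case by (simp add: add.commute)
qed

lemma sqrt_sum: assumes k: "k \<ge> 0"
  shows "(\<Sum>t\<le>T. k / sqrt (real t + 1)) \<ge> k * sqrt (real T + 1)"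
proof -
  have "(\<Sum>t\<le>T. k / sqrt (real T + 1)) \<le> (\<Sum>t\<le>T. k / sqrt (real t + 1))"
    by (intro sum_mono divide_left_mono) (use k in auto)
  moreover have "(\<Sum>t\<le>T. k / sqrt (real T + 1)) = k * sqrt (real T + 1)"
  proof -
    have "(\<Sum>t\<le>T. k / sqrt (real T + 1)) = (real T + 1) * (k / sqrt (real T + 1))" by simp
    also have "\<dots> = k * sqrt (real T + 1)"
    proof -
      have s: "sqrt (real T + 1) * sqrt (real T + 1) = real T + 1" by simp
      have "sqrt (real T + 1) > 0" by simp
      then show ?thesis using s by (simp add: field_simps)
    qed
    finally show ?thesis .
  qed
  ultimately show ?thesis by simp
qed


locale main = cons E a \<gamma> S + prob X f g Y Yk eps
  for E :: "nat \<Rightarrow> ('m::finite \<times> 'm) set" and a \<gamma> S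
    and X :: "(real^'n) set" and f :: "'m \<Rightarrow> real^'n \<Rightarrow> real"
    and g :: "'m \<Rightarrow> real^'n \<Rightarrow> real \<Rightarrow> real" and Y Yk :: "'m \<Rightarrow> real set" and eps :: "'m \<Rightarrow> real" +
  fixes \<alpha> :: "nat \<Rightarrow> real" and \<theta> :: "'m \<Rightarrow> nat \<Rightarrow> (real^'n) \<times> (real^'m)"
  assumes alpha_pos: "\<And>t. \<alpha> t > 0"
    and alpha_noninc: "\<And>t. \<alpha> (Suc t) \<le> \<alpha> t"
    and dpg: "\<And>i t. \<theta> i (Suc t) =
        closest_point (Omega_i X f g Yk eps i) ((\<Sum>j\<in>UNIV. a t i j *\<^sub>R \<theta> j t) - \<alpha> t *\<^sub>R cvec)"
begin

abbreviation cc :: "(real^'n) \<times> (real^'m)" where "cc \<equiv> cvec"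

definition "w i t = (\<Sum>j\<in>UNIV. a t i j *\<^sub>R \<theta> j t)"
definition "v i t = w i t - \<alpha> t *\<^sub>R cvec"
definition "r i t = \<theta> i (Suc t) - v i t"
definition "thb t = (\<Sum>j\<in>UNIV. phi t j *\<^sub>R \<theta> j t)"
definition "D t = (\<Sum>b\<in>Basis. mx (\<lambda>i. \<theta> i t \<bullet> b) - mn (\<lambda>i. \<theta> i t \<bullet> b))"
definition "bb t = (\<Sum>i\<in>UNIV. norm (\<theta> i (Suc t) - w i t))"

lemma alpha_anti: "s \<le> t \<Longrightarrow> \<alpha> t \<le> \<alpha> s"
  by (induction t rule: dec_induct) (auto intro: order_trans alpha_noninc)

lemma theta_suc: "\<theta> i (Suc t) = closest_point (Om i) (v i t)"
  unfolding v_def w_def using dpg by simp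

lemma Om_ne: "Om i \<noteq> {}" using minimizer OM_sub by blast

lemma theta_in: "\<theta> i (Suc t) \<in> Om i"
  unfolding theta_suc by (rule closest_point_in_set[OF Om_closed Om_ne])

lemma theta_in1: "t \<ge> 1 \<Longrightarrow> \<theta> i t \<in> Om i"
  using theta_in[of i "t - 1"] by simp

lemma proj: assumes q: "q \<in> Om i"
  shows "(norm (\<theta> i (Suc t) - q))\<^sup>2 + (norm (r i t))\<^sup>2 \<le> (norm (v i t - q))\<^sup>2"
proof -
  define P where "P = \<theta> i (Suc t)"
  have dot: "(v i t - P) \<bullet> (q - P) \<le> 0"
    unfolding P_def theta_suc by (rule closest_point_dot[OF Om_convex Om_closed q])
  have "v i t - q = (v i t - P) - (q - P)" by simp
  then have "(norm (v i t - q))\<^sup>2 = (norm (v i t - P))\<^sup>2 + (norm (q - P))\<^sup>2 - 2 * ((v i t - P) \<bullet> (q - P))"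
    by (simp add: power2_norm_eq_inner inner_diff_left inner_diff_right inner_commute)
  moreover have "norm (r i t) = norm (v i t - P)" unfolding r_def P_def by (simp add: norm_minus_commute)
  moreover have "norm (\<theta> i (Suc t) - q) = norm (q - P)" unfolding P_def by (simp add: norm_minus_commute)
  ultimately show ?thesis using dot by simp
qed

lemma sq_jensen:
  fixes c n :: "'m \<Rightarrow> real"
  assumes "\<And>j. c j \<ge> 0" "(\<Sum>j\<in>UNIV. c j) = 1"
  shows "(\<Sum>j\<in>UNIV. c j * n j)\<^sup>2 \<le> (\<Sum>j\<in>UNIV. c j * (n j)\<^sup>2)"
proof -
  define m where "m = (\<Sum>j\<in>UNIV. c j * n j)"
  have "0 \<le> (\<Sum>j\<in>UNIV. c j * (n j - m)\<^sup>2)" using assms by (intro sum_nonneg) auto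
  also have "\<dots> = (\<Sum>j\<in>UNIV. c j * (n j)\<^sup>2) - 2 * m * (\<Sum>j\<in>UNIV. c j * n j) + m\<^sup>2 * (\<Sum>j\<in>UNIV. c j)"
    by (simp add: power2_diff algebra_simps sum.distrib sum_subtractf sum_distrib_left sum_distrib_right)
  also have "\<dots> = (\<Sum>j\<in>UNIV. c j * (n j)\<^sup>2) - m\<^sup>2" using assms(2) unfolding m_def by (simp add: power2_eq_square)
  finally show ?thesis unfolding m_def by simp
qed

lemma w_minus: "w i t - q = (\<Sum>j\<in>UNIV. a t i j *\<^sub>R (\<theta> j t - q))"
proof -
  have "(\<Sum>j\<in>UNIV. a t i j *\<^sub>R (\<theta> j t - q)) = w i t - (\<Sum>j\<in>UNIV. a t i j) *\<^sub>R q"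
    unfolding w_def by (simp add: scaleR_diff_right sum_subtractf scaleR_sum_left)
  then show ?thesis using a_sum by simp
qed

lemma jensen: "(norm (w i t - q))\<^sup>2 \<le> (\<Sum>j\<in>UNIV. a t i j * (norm (\<theta> j t - q))\<^sup>2)"
proof -
  have "norm (w i t - q) \<le> (\<Sum>j\<in>UNIV. a t i j * norm (\<theta> j t - q))"
    unfolding w_minus using norm_sum[of "\<lambda>j. a t i j *\<^sub>R (\<theta> j t - q)" UNIV] a_nonneg by simp
  then have "(norm (w i t - q))\<^sup>2 \<le> (\<Sum>j\<in>UNIV. a t i j * norm (\<theta> j t - q))\<^sup>2"
    by (intro power_mono) auto
  also have "\<dots> \<le> (\<Sum>j\<in>UNIV. a t i j * (norm (\<theta> j t - q))\<^sup>2)"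
    by (rule sq_jensen) (auto simp: a_nonneg a_sum)
  finally show ?thesis .
qed

lemma expand: "(norm (v i t - q))\<^sup>2 = (norm (w i t - q))\<^sup>2 - 2 * \<alpha> t * (cvec \<bullet> (w i t - q)) + (\<alpha> t)\<^sup>2 * (norm cc)\<^sup>2"
proof -
  have e: "v i t - q = (w i t - q) - \<alpha> t *\<^sub>R cvec" unfolding v_def by simp
  have gen: "(norm (x - y))\<^sup>2 = (norm x)\<^sup>2 - 2 * (x \<bullet> y) + (norm y)\<^sup>2" for x y :: "(real^'n) \<times> (real^'m)"
    by (simp add: power2_norm_eq_inner inner_diff_left inner_diff_right inner_commute)
  show ?thesis unfolding e gen by (simp add: inner_commute power_mult_distrib)
qed

lemma reweigh: "(\<Sum>i\<in>UNIV. phi (Suc t) i * (\<Sum>j\<in>UNIV. a t i j * Z j)) = (\<Sum>j\<in>UNIV. phi t j * Z j)"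
proof -
  have "(\<Sum>i\<in>UNIV. phi (Suc t) i * (\<Sum>j\<in>UNIV. a t i j * Z j)) = (\<Sum>j\<in>UNIV. (\<Sum>i\<in>UNIV. a t i j * phi (Suc t) i) * Z j)"
    by (simp add: sum_distrib_left sum_distrib_right mult_ac) (rule sum.swap)
  also have "\<dots> = (\<Sum>j\<in>UNIV. phi t j * Z j)" by (simp add: phi_rec[symmetric])
  finally show ?thesis .
qed

lemma cw: "cvec \<bullet> w i t = (\<Sum>j\<in>UNIV. a t i j * (cvec \<bullet> \<theta> j t))"
  unfolding w_def by (simp add: inner_sum_right)

lemma f0_thb: "f0 (thb t) = (\<Sum>j\<in>UNIV. phi t j * f0 (\<theta> j t))"
  unfolding thb_def f0_def by (simp add: inner_sum_right)


lemma lin_sum: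
  fixes pp A B R :: "'m \<Rightarrow> real"
  shows "(\<Sum>i\<in>UNIV. pp i * (A i - 2 * al * (B i - F) + C - R i)) =
     (\<Sum>i\<in>UNIV. pp i * A i) - 2 * al * (\<Sum>i\<in>UNIV. pp i * B i) + (2 * al * F + C) * (\<Sum>i\<in>UNIV. pp i) - (\<Sum>i\<in>UNIV. pp i * R i)"
proof -
  have "(\<Sum>i\<in>UNIV. pp i * (A i - 2 * al * (B i - F) + C - R i)) =
     (\<Sum>i\<in>UNIV. pp i * A i - (2 * al) * (pp i * B i) + (2 * al * F + C) * pp i - pp i * R i)"
    by (rule sum.cong) (auto simp: algebra_simps)
  also have "\<dots> = (\<Sum>i\<in>UNIV. pp i * A i) - (\<Sum>i\<in>UNIV. (2 * al) * (pp i * B i)) + (\<Sum>i\<in>UNIV. (2 * al * F + C) * pp i) - (\<Sum>i\<in>UNIV. pp i * R i)"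
    by (simp add: sum.distrib sum_subtractf)
  also have "\<dots> = (\<Sum>i\<in>UNIV. pp i * A i) - 2 * al * (\<Sum>i\<in>UNIV. pp i * B i) + (2 * al * F + C) * (\<Sum>i\<in>UNIV. pp i) - (\<Sum>i\<in>UNIV. pp i * R i)"
    by (simp add: sum_distrib_left)
  finally show ?thesis .
qed

lemma lyap: assumes q: "q \<in> OM"
  shows "(\<Sum>i\<in>UNIV. phi (Suc t) i * (norm (\<theta> i (Suc t) - q))\<^sup>2)
    \<le> (\<Sum>j\<in>UNIV. phi t j * (norm (\<theta> j t - q))\<^sup>2) - 2 * \<alpha> t * (f0 (thb t) - f0 q)
       + (\<alpha> t)\<^sup>2 * (norm cc)\<^sup>2 - \<gamma>^(CARD('m)*S) * (\<Sum>i\<in>UNIV. (norm (r i t))\<^sup>2)"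
proof -
  define A where "A i = (\<Sum>j\<in>UNIV. a t i j * (norm (\<theta> j t - q))\<^sup>2)" for i
  define B where "B i = cc \<bullet> w i t" for i
  define R where "R i = (norm (r i t))\<^sup>2" for i
  define C where "C = (\<alpha> t)\<^sup>2 * (norm cc)\<^sup>2"
  define F where "F = f0 q"
  have pi: "(norm (\<theta> i (Suc t) - q))\<^sup>2 \<le> A i - 2 * \<alpha> t * (B i - F) + C - R i" for i
  proof -
    have qi: "q \<in> Om i" using q OM_sub by blast
    have "cc \<bullet> (w i t - q) = B i - F" unfolding B_def F_def f0_def by (simp add: inner_diff_right)
    then have "(norm (v i t - q))\<^sup>2 = (norm (w i t - q))\<^sup>2 - 2 * \<alpha> t * (B i - F) + C"
      using expand[of i t q] unfolding C_def by simp
    then show ?thesis using proj[OF qi, of t] jensen[of i t q] unfolding A_def R_def by linarith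
  qed
  have "(\<Sum>i\<in>UNIV. phi (Suc t) i * (norm (\<theta> i (Suc t) - q))\<^sup>2)
      \<le> (\<Sum>i\<in>UNIV. phi (Suc t) i * (A i - 2 * \<alpha> t * (B i - F) + C - R i))"
    by (intro sum_mono mult_left_mono pi phi_nonneg)
  also have "\<dots> = (\<Sum>i\<in>UNIV. phi (Suc t) i * A i) - 2 * \<alpha> t * (\<Sum>i\<in>UNIV. phi (Suc t) i * B i)
      + (2 * \<alpha> t * F + C) * (\<Sum>i\<in>UNIV. phi (Suc t) i) - (\<Sum>i\<in>UNIV. phi (Suc t) i * R i)"
    by (rule lin_sum)
  also have "(\<Sum>i\<in>UNIV. phi (Suc t) i * A i) = (\<Sum>j\<in>UNIV. phi t j * (norm (\<theta> j t - q))\<^sup>2)"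
    unfolding A_def by (rule reweigh)
  also have "(\<Sum>i\<in>UNIV. phi (Suc t) i * B i) = f0 (thb t)"
    unfolding B_def cw f0_thb reweigh by (simp add: f0_def)
  also have "(\<Sum>i\<in>UNIV. phi (Suc t) i) = 1" by (rule phi_sum)
  finally have main: "(\<Sum>i\<in>UNIV. phi (Suc t) i * (norm (\<theta> i (Suc t) - q))\<^sup>2)
    \<le> (\<Sum>j\<in>UNIV. phi t j * (norm (\<theta> j t - q))\<^sup>2) - 2 * \<alpha> t * f0 (thb t) + (2 * \<alpha> t * F + C) * 1
       - (\<Sum>i\<in>UNIV. phi (Suc t) i * R i)" .
  have Rb: "(\<Sum>i\<in>UNIV. phi (Suc t) i * R i) \<ge> \<gamma>^(CARD('m)*S) * (\<Sum>i\<in>UNIV. R i)"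
  proof -
    have "(\<Sum>i\<in>UNIV. \<gamma>^(CARD('m)*S) * R i) \<le> (\<Sum>i\<in>UNIV. phi (Suc t) i * R i)"
      by (intro sum_mono mult_right_mono phi_lower) (auto simp: R_def)
    then show ?thesis by (simp add: sum_distrib_left)
  qed
  have "- 2 * \<alpha> t * f0 (thb t) + (2 * \<alpha> t * F + C) * 1 = - 2 * \<alpha> t * (f0 (thb t) - f0 q) + (\<alpha> t)\<^sup>2 * (norm cc)\<^sup>2"
    unfolding F_def C_def by (simp add: algebra_simps)
  then show ?thesis using main Rb unfolding R_def by linarith
qed

lemma theta_rec: "\<theta> i (Suc s) \<bullet> b = (\<Sum>j\<in>UNIV. a s i j * (\<theta> j s \<bullet> b)) + (\<theta> i (Suc s) - w i s) \<bullet> b"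
  unfolding w_def by (simp add: inner_diff_left inner_sum_left)

lemma e_bound: "b \<in> Basis \<Longrightarrow> \<bar>(\<theta> i (Suc s) - w i s) \<bullet> b\<bar> \<le> bb s"
proof -
  assume b: "b \<in> Basis"
  have "\<bar>(\<theta> i (Suc s) - w i s) \<bullet> b\<bar> \<le> norm (\<theta> i (Suc s) - w i s)" by (rule Basis_le_norm[OF b])
  also have "\<dots> \<le> bb s" unfolding bb_def by (rule member_le_sum) auto
  finally show ?thesis .
qed

lemma bb_nonneg: "bb s \<ge> 0" unfolding bb_def by (simp add: sum_nonneg)

lemma D_win:
  "D (t + CARD('m)*S) \<le> (1 - \<gamma>^(CARD('m)*S)) * D t + 2 * (real DIM((real^'n) \<times> (real^'m)) * (\<Sum>r\<in>{t..<t+CARD('m)*S}. bb r))"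
  "D (t + n) \<le> D t + 2 * (real DIM((real^'n) \<times> (real^'m)) * (\<Sum>r\<in>{t..<t+n}. bb r))"
proof -
  define sp where "sp b u = mx (\<lambda>i. \<theta> i u \<bullet> b) - mn (\<lambda>i. \<theta> i u \<bullet> b)" for b :: "(real^'n) \<times> (real^'m)" and u
  have D_sp: "D u = (\<Sum>b\<in>Basis. sp b u)" for u unfolding D_def sp_def by simp
  have W: "sp b (t + CARD('m)*S) \<le> (1 - \<gamma>^(CARD('m)*S)) * sp b t + 2 * (\<Sum>r\<in>{t..<t+CARD('m)*S}. bb r)"
   and N: "sp b (t + n) \<le> sp b t + 2 * (\<Sum>r\<in>{t..<t+n}. bb r)" if b: "b \<in> Basis" for b
  proof -
    have rec: "\<And>s i. (\<lambda>s i. \<theta> i s \<bullet> b) (Suc s) i = (\<Sum>j\<in>UNIV. a s i j * (\<lambda>s i. \<theta> i s \<bullet> b) s j) + (\<lambda>s i. (\<theta> i (Suc s) - w i s) \<bullet> b) s i"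
      by (simp add: theta_rec)
    have eb: "\<And>s i. \<bar>(\<lambda>s i. (\<theta> i (Suc s) - w i s) \<bullet> b) s i\<bar> \<le> bb s" using e_bound[OF b] by simp
    show "sp b (t + CARD('m)*S) \<le> (1 - \<gamma>^(CARD('m)*S)) * sp b t + 2 * (\<Sum>r\<in>{t..<t+CARD('m)*S}. bb r)"
      using window_spread(1)[OF rec eb, of t] unfolding sp_def by simp
    show "sp b (t + n) \<le> sp b t + 2 * (\<Sum>r\<in>{t..<t+n}. bb r)"
      using window_spread(2)[OF rec eb, of t n] unfolding sp_def by simp
  qed
  have "D (t + CARD('m)*S) \<le> (\<Sum>b\<in>Basis. (1 - \<gamma>^(CARD('m)*S)) * sp b t + 2 * (\<Sum>r\<in>{t..<t+CARD('m)*S}. bb r))"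
    unfolding D_sp by (rule sum_mono) (rule W)
  also have "\<dots> = (1 - \<gamma>^(CARD('m)*S)) * D t + 2 * (real DIM((real^'n) \<times> (real^'m)) * (\<Sum>r\<in>{t..<t+CARD('m)*S}. bb r))"
    unfolding D_sp by (simp add: sum.distrib sum_distrib_left mult.left_commute)
  finally show "D (t + CARD('m)*S) \<le> (1 - \<gamma>^(CARD('m)*S)) * D t + 2 * (real DIM((real^'n) \<times> (real^'m)) * (\<Sum>r\<in>{t..<t+CARD('m)*S}. bb r))" .
  have "D (t + n) \<le> (\<Sum>b\<in>Basis. sp b t + 2 * (\<Sum>r\<in>{t..<t+n}. bb r))"
    unfolding D_sp by (rule sum_mono) (rule N)
  also have "\<dots> = D t + 2 * (real DIM((real^'n) \<times> (real^'m)) * (\<Sum>r\<in>{t..<t+n}. bb r))"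
    unfolding D_sp by (simp add: sum.distrib sum_distrib_left mult.left_commute)
  finally show "D (t + n) \<le> D t + 2 * (real DIM((real^'n) \<times> (real^'m)) * (\<Sum>r\<in>{t..<t+n}. bb r))" .
qed

lemma diff_le_D: "norm (\<theta> i t - \<theta> j t) \<le> D t"
proof -
  have "norm (\<theta> i t - \<theta> j t) \<le> (\<Sum>b\<in>Basis. \<bar>(\<theta> i t - \<theta> j t) \<bullet> b\<bar>)" by (rule norm_le_l1)
  also have "\<dots> \<le> D t" unfolding D_def
  proof (rule sum_mono)
    fix b :: "(real^'n) \<times> (real^'m)"
    have "\<theta> i t \<bullet> b \<le> mx (\<lambda>i. \<theta> i t \<bullet> b)" "\<theta> j t \<bullet> b \<le> mx (\<lambda>i. \<theta> i t \<bullet> b)"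
      "mn (\<lambda>i. \<theta> i t \<bullet> b) \<le> \<theta> i t \<bullet> b" "mn (\<lambda>i. \<theta> i t \<bullet> b) \<le> \<theta> j t \<bullet> b"
      using mx_ge[of "\<lambda>i. \<theta> i t \<bullet> b"] mn_le[of "\<lambda>i. \<theta> i t \<bullet> b"] by auto
    then show "\<bar>(\<theta> i t - \<theta> j t) \<bullet> b\<bar> \<le> mx (\<lambda>i. \<theta> i t \<bullet> b) - mn (\<lambda>i. \<theta> i t \<bullet> b)"
      by (simp add: inner_diff_left abs_le_iff)
  qed
  finally show ?thesis .
qed

lemma D_nonneg: "D t \<ge> 0"
proof -
  obtain i :: 'm where True by blast
  show ?thesis using diff_le_D[of i t i] by simp
qed

lemma thb_close: "norm (thb t - \<theta> j t) \<le> D t"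
proof -
  have "thb t - \<theta> j t = (\<Sum>k\<in>UNIV. phi t k *\<^sub>R (\<theta> k t - \<theta> j t))"
  proof -
    have "(\<Sum>k\<in>UNIV. phi t k *\<^sub>R (\<theta> k t - \<theta> j t)) = thb t - (\<Sum>k\<in>UNIV. phi t k) *\<^sub>R \<theta> j t"
      unfolding thb_def by (simp add: scaleR_diff_right sum_subtractf scaleR_sum_left)
    then show ?thesis using phi_sum by simp
  qed
  also have "norm \<dots> \<le> (\<Sum>k\<in>UNIV. phi t k * norm (\<theta> k t - \<theta> j t))"
    using norm_sum[of "\<lambda>k. phi t k *\<^sub>R (\<theta> k t - \<theta> j t)" UNIV] phi_nonneg by simp
  also have "\<dots> \<le> (\<Sum>k\<in>UNIV. phi t k * D t)"
    by (intro sum_mono mult_left_mono diff_le_D phi_nonneg)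
  also have "\<dots> = D t" using phi_sum by (simp add: sum_distrib_right[symmetric])
  finally show ?thesis .
qed

lemma thb_X: "t \<ge> 1 \<Longrightarrow> fst (thb t) \<in> X"
proof -
  assume t: "t \<ge> 1"
  have "fst (thb t) = (\<Sum>j\<in>UNIV. phi t j *\<^sub>R fst (\<theta> j t))" unfolding thb_def by (simp add: fst_sum)
  also have "\<dots> \<in> X"
    by (rule convex_sum) (use X(3) phi_sum phi_nonneg theta_in1[OF t] in \<open>auto simp: Omega_i_def\<close>)
  finally show ?thesis .
qed

lemma lower_thb:
  assumes Cl: "Cl > 0" and sl: "\<forall>z p \<epsilon>. fst z \<in> X \<longrightarrow> (\<forall>j. p j \<in> Om j) \<longrightarrow> (\<forall>j. norm (z - p j) \<le> \<epsilon>) \<longrightarrow> \<epsilon> > 0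
      \<longrightarrow> f0 z - fs \<ge> - Cl * \<epsilon>"
    and t: "t \<ge> 1"
  shows "f0 (thb t) - fs \<ge> - Cl * D t"
proof (rule field_le_epsilon)
  fix e :: real assume e: "e > 0"
  define h where "h = e / Cl"
  have h: "h > 0" unfolding h_def using e Cl by simp
  have cl: "\<forall>j. norm (thb t - \<theta> j t) \<le> D t + h" using thb_close[of t] h by (simp add: add_increasing2)
  have pos: "D t + h > 0" using D_nonneg[of t] h by simp
  have "f0 (thb t) - fs \<ge> - Cl * (D t + h)"
    by (rule sl[rule_format]) (use thb_X[OF t] theta_in1[OF t] cl pos in auto)
  moreover have "Cl * h = e" unfolding h_def using Cl by simp
  ultimately show "- Cl * D t \<le> f0 (thb t) - fs + e" by (simp add: algebra_simps)
qed

lemma bb_bound: "bb t \<le> (\<Sum>i\<in>UNIV. norm (r i t)) + real CARD('m) * (\<alpha> t * norm cc)"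
proof -
  have "norm (\<theta> i (Suc t) - w i t) \<le> norm (r i t) + \<alpha> t * norm cc" for i
  proof -
    have "\<theta> i (Suc t) - w i t = r i t - \<alpha> t *\<^sub>R cc" unfolding r_def v_def by simp
    then show ?thesis using norm_triangle_ineq4[of "r i t" "\<alpha> t *\<^sub>R cc"] alpha_pos[of t] by simp
  qed
  then have "bb t \<le> (\<Sum>i\<in>UNIV. norm (r i t) + \<alpha> t * norm cc)" unfolding bb_def by (rule sum_mono)
  then show ?thesis by (simp add: sum.distrib)
qed

end


context main begin

lemma sum_bound:
  assumes k1: "0 < \<kappa>1" and k2: "\<And>t. \<alpha> t \<le> \<kappa>2 / sqrt (real t + 1)"
  shows "\<exists>P0 P1. P0 \<ge> 0 \<and> P1 \<ge> 0 \<and> (\<forall>i T. T \<ge> 1 \<longrightarrow>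
           \<bar>\<Sum>r\<le>T. \<alpha> r * (f0 (\<theta> i r) - fs)\<bar> \<le> P0 + P1 * ln (real T + 1))"
proof -
  obtain \<theta>s where ths: "\<theta>s \<in> OM" "f0 \<theta>s = fs" using minimizer by blast
  obtain Cl where Cl: "Cl > 0" and sl: "\<forall>z p \<epsilon>. fst z \<in> X \<longrightarrow> (\<forall>j. p j \<in> Om j) \<longrightarrow> (\<forall>j. norm (z - p j) \<le> \<epsilon>) \<longrightarrow> \<epsilon> > 0
      \<longrightarrow> f0 z - fs \<ge> - Cl * \<epsilon>" using slater by blast
  define L where "L = CARD('m) * S"
  define \<beta> where "\<beta> = 1 - \<gamma>^L"
  define \<rho> where "\<rho> = root L \<beta>"
  define M where "M = real DIM((real^'n) \<times> (real^'m))"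
  define p where "p = \<gamma>^L"
  define c where "c = norm cc"
  define mC where "mC = real CARD('m)"
  define V where "V t = (\<Sum>j\<in>UNIV. phi t j * (norm (\<theta> j t - \<theta>s))\<^sup>2)" for t
  have L: "L > 0" unfolding L_def using Spos by simp
  have b: "0 < \<beta>" "\<beta> < 1" unfolding \<beta>_def L_def using beta by auto
  have rhoL: "\<rho>^L = \<beta>" unfolding \<rho>_def using L b by (simp add: real_root_pow_pos2)
  have rho: "0 < \<rho>" "\<rho> < 1" unfolding \<rho>_def using L b by (auto simp: real_root_gt_zero real_root_lt_1_iff)
  have p: "p > 0" unfolding p_def using gam by simp
  have M: "M \<ge> 0" unfolding M_def by simp
  have c: "c \<ge> 0" unfolding c_def by simp
  have mC: "mC \<ge> 0" unfolding mC_def by simp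
  have V0: "V t \<ge> 0" for t unfolding V_def by (intro sum_nonneg mult_nonneg_nonneg phi_nonneg) auto
  have Dbnd: "D t \<le> (\<rho>^(t-1) * D 1 + 2 * (\<Sum>s\<in>{1..<t}. \<rho>^(t-1-s) * (M * bb s))) / \<beta>" if "t \<ge> 1" for t
  proof (rule unroll[OF L b(1) rhoL rho(1) less_imp_le[OF rho(2)] _ D_nonneg _ _ that])
    show "\<And>s. 0 \<le> M * bb s" using M bb_nonneg by simp
    show "D (t + n) \<le> D t + 2 * (\<Sum>r\<in>{t..<t+n}. M * bb r)" for t n
      using D_win(2)[of t n] unfolding M_def by (simp add: sum_distrib_left)
    show "D (t + L) \<le> \<beta> * D t + 2 * (\<Sum>r\<in>{t..<t+L}. M * bb r)" for t
      using D_win(1)[of t] unfolding M_def \<beta>_def L_def by (simp add: sum_distrib_left)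
  qed
  define K0 where "K0 = \<alpha> 1 * D 1 / ((1 - \<rho>) * \<beta>)"
  define K1 where "K1 = 2 * M / ((1 - \<rho>) * \<beta>) + 1"
  have K0: "K0 \<ge> 0" unfolding K0_def using alpha_pos[of 1] D_nonneg[of 1] rho b by simp
  have K1: "K1 > 0" unfolding K1_def using M rho b by (simp add: add_nonneg_pos)
  define \<eta> where "\<eta> = p / (2 * Cl * K1)"
  have eta: "\<eta> > 0" unfolding \<eta>_def using p Cl K1 by simp
  define Ce where "Ce = mC / (2 * \<eta>) + mC * c"
  have Ce: "Ce \<ge> 0" unfolding Ce_def using mC c eta by simp
  define V1 where "V1 = V 1"
  define c2 where "c2 = c\<^sup>2"
  define D0 where "D0 = K0 + (V1 + 2*Cl*K0)/(2*Cl)"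
  define D1 where "D1 = K1*Ce + (c2 + 2*Cl*K1*Ce)/(2*Cl)"
  have D0: "D0 \<ge> 0" unfolding D0_def V1_def using K0 V0[of 1] Cl by simp
  have D1: "D1 \<ge> 0" unfolding D1_def c2_def using K1 Ce Cl by simp
  define H0 where "H0 = \<alpha> 0 * (\<Sum>i\<in>UNIV. \<bar>f0 (\<theta> i 0) - fs\<bar>)"
  have H0: "H0 \<ge> 0" unfolding H0_def using alpha_pos[of 0] by (simp add: sum_nonneg)
  define P0 where "P0 = H0 + (c + Cl) * D0 + V1 / 2"
  define P1 where "P1 = ((c + Cl) * D1 + c2 / 2) * \<kappa>2\<^sup>2"
  have P0: "P0 \<ge> 0" unfolding P0_def V1_def using H0 D0 c Cl V0[of 1] by simp
  have P1: "P1 \<ge> 0" unfolding P1_def c2_def using D1 c Cl by simp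
  have main: "\<bar>\<Sum>r\<le>T. \<alpha> r * (f0 (\<theta> i r) - fs)\<bar> \<le> P0 + P1 * ln (real T + 1)" if T: "T \<ge> 1" for i T
  proof -
    define A2 where "A2 = (\<Sum>t\<in>{1..T}. (\<alpha> t)\<^sup>2)"
    define Rs where "Rs = (\<Sum>t\<in>{1..T}. \<Sum>i\<in>UNIV. (norm (r i t))\<^sup>2)"
    define Fs where "Fs = (\<Sum>t\<in>{1..T}. \<alpha> t * (f0 (thb t) - fs))"
    define Ds where "Ds = (\<Sum>t\<in>{1..T}. \<alpha> t * D t)"
    define Sb where "Sb = (\<Sum>t\<in>{1..T}. \<alpha> t * bb t)"
    have Rs0: "Rs \<ge> 0" unfolding Rs_def by (simp add: sum_nonneg)
    have A2b: "A2 \<le> \<kappa>2\<^sup>2 * ln (real T + 1)"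
    proof -
      have "A2 \<le> (\<Sum>t\<in>{1..T}. \<kappa>2\<^sup>2 * (1 / (real t + 1)))" unfolding A2_def
      proof (rule sum_mono)
        fix t
        have "(\<alpha> t)\<^sup>2 \<le> (\<kappa>2 / sqrt (real t + 1))\<^sup>2"
          using k2[of t] alpha_pos[of t] by (intro power_mono) auto
        also have "\<dots> = \<kappa>2\<^sup>2 * (1 / (real t + 1))" by (simp add: power_divide)
        finally show "(\<alpha> t)\<^sup>2 \<le> \<kappa>2\<^sup>2 * (1 / (real t + 1))" .
      qed
      also have "\<dots> = \<kappa>2\<^sup>2 * (\<Sum>t\<in>{1..T}. 1 / (real t + 1))" by (simp add: sum_distrib_left)
      also have "\<dots> \<le> \<kappa>2\<^sup>2 * ln (real T + 1)" by (intro mult_left_mono harm_ln) auto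
      finally show ?thesis .
    qed
    have III: "Ds \<le> K0 + K1 * Sb"
    proof -
      have "Ds \<le> (\<alpha> 1 * D 1 / (1 - \<rho>) + 2 / (1 - \<rho>) * (\<Sum>s\<in>{1..T}. \<alpha> s * (M * bb s))) / \<beta>"
        unfolding Ds_def
        by (rule weighted_sum[OF b(1) less_imp_le[OF rho(1)] rho(2) _ D_nonneg _ alpha_anti Dbnd])
           (use M bb_nonneg alpha_pos in \<open>auto intro: less_imp_le\<close>)
      also have "(\<Sum>s\<in>{1..T}. \<alpha> s * (M * bb s)) = M * Sb"
        unfolding Sb_def by (simp add: sum_distrib_left mult.left_commute)
      also have "(\<alpha> 1 * D 1 / (1 - \<rho>) + 2 / (1 - \<rho>) * (M * Sb)) / \<beta> = K0 + (2 * M / ((1 - \<rho>) * \<beta>)) * Sb"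
      proof -
        have "1 - \<rho> \<noteq> 0" "\<beta> \<noteq> 0" using rho b by auto
        have gen: "\<And>x y aa MM SS :: real. x \<noteq> 0 \<Longrightarrow> y \<noteq> 0 \<Longrightarrow>
            (aa / x + 2 / x * (MM * SS)) / y = aa / (x * y) + (2 * MM / (x * y)) * SS"
          by (simp add: field_simps)
        show ?thesis unfolding K0_def using gen[OF \<open>1 - \<rho> \<noteq> 0\<close> \<open>\<beta> \<noteq> 0\<close>] by simp
      qed
      also have "\<dots> \<le> K0 + K1 * Sb"
      proof -
        have "Sb \<ge> 0" unfolding Sb_def using alpha_pos bb_nonneg by (intro sum_nonneg) (simp add: less_imp_le)
        then show ?thesis unfolding K1_def by (simp add: algebra_simps)
      qed
      finally show ?thesis .
    qed
    have IV: "Sb \<le> Ce * A2 + (p / (4 * Cl * K1)) * Rs"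
    proof -
      have "\<alpha> t * bb t \<le> Ce * (\<alpha> t)\<^sup>2 + (\<eta> / 2) * (\<Sum>i\<in>UNIV. (norm (r i t))\<^sup>2)" for t
      proof -
        have "\<alpha> t * bb t \<le> \<alpha> t * ((\<Sum>i\<in>UNIV. norm (r i t)) + mC * (\<alpha> t * c))"
          using bb_bound[of t] alpha_pos[of t] unfolding mC_def c_def by (intro mult_left_mono) auto
        also have "\<dots> = (\<Sum>i\<in>UNIV. \<alpha> t * norm (r i t)) + mC * c * (\<alpha> t)\<^sup>2"
          by (simp add: sum_distrib_left algebra_simps power2_eq_square)
        also have "(\<Sum>i\<in>UNIV. \<alpha> t * norm (r i t)) \<le> (\<Sum>i\<in>UNIV. (\<alpha> t)\<^sup>2 / (2 * \<eta>) + (\<eta> / 2) * (norm (r i t))\<^sup>2)"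
          by (intro sum_mono amgm eta)
        also have "\<dots> = mC * ((\<alpha> t)\<^sup>2 / (2 * \<eta>)) + (\<eta> / 2) * (\<Sum>i\<in>UNIV. (norm (r i t))\<^sup>2)"
          unfolding mC_def by (simp add: sum.distrib sum_distrib_left)
        finally show ?thesis unfolding Ce_def by (simp add: algebra_simps)
      qed
      then have "Sb \<le> (\<Sum>t\<in>{1..T}. Ce * (\<alpha> t)\<^sup>2 + (\<eta> / 2) * (\<Sum>i\<in>UNIV. (norm (r i t))\<^sup>2))"
        unfolding Sb_def by (intro sum_mono)
      also have "\<dots> = Ce * A2 + (\<eta> / 2) * Rs"
        unfolding A2_def Rs_def by (simp add: sum.distrib sum_distrib_left)
      also have "\<eta> / 2 = p / (4 * Cl * K1)" unfolding \<eta>_def by simp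
      finally show ?thesis .
    qed
    have I: "2 * Fs + p * Rs \<le> V1 + c2 * A2"
    proof -
      have step: "V (Suc t) - V t \<le> - 2 * (\<alpha> t * (f0 (thb t) - fs)) + c2 * (\<alpha> t)\<^sup>2 - p * (\<Sum>i\<in>UNIV. (norm (r i t))\<^sup>2)" for t
        using lyap[OF ths(1), of t] ths(2) unfolding V_def c2_def c_def p_def L_def by (simp add: algebra_simps)
      have "V (Suc T) - V 1 = (\<Sum>t\<in>{1..T}. V (Suc t) - V t)" by (rule sum_Suc_diff[symmetric]) (use T in simp)
      also have "\<dots> \<le> (\<Sum>t\<in>{1..T}. - 2 * (\<alpha> t * (f0 (thb t) - fs)) + c2 * (\<alpha> t)\<^sup>2 - p * (\<Sum>i\<in>UNIV. (norm (r i t))\<^sup>2))"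
        by (intro sum_mono step)
      also have "\<dots> = - 2 * Fs + c2 * A2 - p * Rs"
        unfolding Fs_def A2_def Rs_def by (simp add: sum.distrib sum_subtractf sum_distrib_left sum_negf)
      finally show ?thesis using V0[of "Suc T"] unfolding V1_def by linarith
    qed
    have II: "Fs \<ge> - Cl * Ds"
    proof -
      have "(\<Sum>t\<in>{1..T}. \<alpha> t * (- Cl * D t)) \<le> Fs" unfolding Fs_def
        by (intro sum_mono mult_left_mono lower_thb[OF Cl sl]) (use alpha_pos in \<open>auto intro: less_imp_le\<close>)
      moreover have "(\<Sum>t\<in>{1..T}. \<alpha> t * (- Cl * D t)) = - Cl * Ds" unfolding Ds_def
        by (simp add: sum_distrib_left algebra_simps)
      ultimately show ?thesis by simp
    qed
    have Dsb: "Ds \<le> D0 + D1 * A2" unfolding D0_def D1_def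
      by (rule assemble[OF p Cl K1 I II III IV])
    have pR: "p * Rs \<ge> 0" using p Rs0 by simp
    have "2 * Fs \<le> V1 + c2 * A2" using I pR by linarith
    then have Fs_up: "Fs \<le> (V1 + c2 * A2) / 2" by (simp add: field_simps)
    have Ds0: "Ds \<ge> 0" unfolding Ds_def using alpha_pos D_nonneg by (intro sum_nonneg) (simp add: less_imp_le)
    have A20: "A2 \<ge> 0" unfolding A2_def by (simp add: sum_nonneg)
    have c20: "c2 \<ge> 0" unfolding c2_def by simp
    have absF: "\<bar>Fs\<bar> \<le> (V1 + c2 * A2) / 2 + Cl * (D0 + D1 * A2)"
    proof -
      have "Cl * Ds \<le> Cl * (D0 + D1 * A2)" using Dsb Cl by (intro mult_left_mono) auto
      moreover have "(V1 + c2 * A2) / 2 \<ge> 0" unfolding V1_def using V0[of 1] c20 A20 by simp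
      moreover have "Cl * Ds \<ge> 0" using Cl Ds0 by simp
      ultimately have "Fs \<le> (V1 + c2 * A2) / 2 + Cl * (D0 + D1 * A2)" "- Fs \<le> (V1 + c2 * A2) / 2 + Cl * (D0 + D1 * A2)"
        using Fs_up II by linarith+
      then show ?thesis by (simp add: abs_le_iff)
    qed
    have split: "(\<Sum>r\<le>T. \<alpha> r * (f0 (\<theta> i r) - fs))
        = \<alpha> 0 * (f0 (\<theta> i 0) - fs) + (\<Sum>t\<in>{1..T}. \<alpha> t * (f0 (\<theta> i t) - f0 (thb t))) + Fs"
    proof -
      have "(\<Sum>r\<le>T. \<alpha> r * (f0 (\<theta> i r) - fs)) = \<alpha> 0 * (f0 (\<theta> i 0) - fs) + (\<Sum>t\<in>{1..T}. \<alpha> t * (f0 (\<theta> i t) - fs))"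
        unfolding atMost_atLeast0 by (simp add: sum.atLeast_Suc_atMost)
      also have "(\<Sum>t\<in>{1..T}. \<alpha> t * (f0 (\<theta> i t) - fs)) = (\<Sum>t\<in>{1..T}. \<alpha> t * (f0 (\<theta> i t) - f0 (thb t))) + Fs"
        unfolding Fs_def by (simp add: sum.distrib[symmetric] algebra_simps)
      finally show ?thesis by simp
    qed
    have t1: "\<bar>\<Sum>t\<in>{1..T}. \<alpha> t * (f0 (\<theta> i t) - f0 (thb t))\<bar> \<le> c * Ds"
    proof -
      have "\<bar>\<Sum>t\<in>{1..T}. \<alpha> t * (f0 (\<theta> i t) - f0 (thb t))\<bar> \<le> (\<Sum>t\<in>{1..T}. \<bar>\<alpha> t * (f0 (\<theta> i t) - f0 (thb t))\<bar>)"
        by (rule sum_abs)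
      also have "\<dots> \<le> (\<Sum>t\<in>{1..T}. \<alpha> t * (c * D t))"
      proof (rule sum_mono)
        fix t
        have "\<bar>f0 (\<theta> i t) - f0 (thb t)\<bar> = \<bar>cc \<bullet> (\<theta> i t - thb t)\<bar>" unfolding f0_def by (simp add: inner_diff_right)
        also have "\<dots> \<le> norm cc * norm (\<theta> i t - thb t)" by (rule Cauchy_Schwarz_ineq2)
        also have "\<dots> \<le> c * D t" unfolding c_def using thb_close[of t i]
          by (intro mult_left_mono) (auto simp: norm_minus_commute)
        finally have "\<bar>f0 (\<theta> i t) - f0 (thb t)\<bar> \<le> c * D t" .
        then show "\<bar>\<alpha> t * (f0 (\<theta> i t) - f0 (thb t))\<bar> \<le> \<alpha> t * (c * D t)"
          using alpha_pos[of t] by (simp add: abs_mult mult_left_mono)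
      qed
      also have "\<dots> = c * Ds" unfolding Ds_def by (simp add: sum_distrib_left algebra_simps)
      finally show ?thesis .
    qed
    have h0: "\<bar>\<alpha> 0 * (f0 (\<theta> i 0) - fs)\<bar> \<le> H0"
    proof -
      have "\<bar>f0 (\<theta> i 0) - fs\<bar> \<le> (\<Sum>i\<in>UNIV. \<bar>f0 (\<theta> i 0) - fs\<bar>)" by (rule member_le_sum) auto
      then show ?thesis unfolding H0_def using alpha_pos[of 0] by (simp add: abs_mult mult_left_mono)
    qed
    have "\<bar>\<Sum>r\<le>T. \<alpha> r * (f0 (\<theta> i r) - fs)\<bar> \<le> H0 + c * Ds + ((V1 + c2 * A2) / 2 + Cl * (D0 + D1 * A2))"
      unfolding split using h0 t1 absF by linarith
    also have "\<dots> \<le> H0 + c * (D0 + D1 * A2) + ((V1 + c2 * A2) / 2 + Cl * (D0 + D1 * A2))"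
      using Dsb c by (simp add: mult_left_mono)
    also have "\<dots> = P0 + ((c + Cl) * D1 + c2 / 2) * A2" unfolding P0_def by (simp add: algebra_simps)
    also have "\<dots> \<le> P0 + ((c + Cl) * D1 + c2 / 2) * (\<kappa>2\<^sup>2 * ln (real T + 1))"
      using A2b c Cl D1 c20 by (intro add_left_mono mult_left_mono) auto
    also have "\<dots> = P0 + P1 * ln (real T + 1)" unfolding P1_def by (simp add: algebra_simps)
    finally show ?thesis .
  qed
  show ?thesis using P0 P1 main by blast
qed

end


theorem theorem2:
  fixes E :: "nat \<Rightarrow> ('m::finite \<times> 'm) set"
    and a :: "nat \<Rightarrow> 'm \<Rightarrow> 'm \<Rightarrow> real"
    and \<gamma> :: real
    and X :: "(real^'n) set"
    and f :: "'m \<Rightarrow> real^'n \<Rightarrow> real"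
    and g :: "'m \<Rightarrow> real^'n \<Rightarrow> real \<Rightarrow> real"
    and Y Yk :: "'m \<Rightarrow> real set"
    and eps :: "'m \<Rightarrow> real"
    and \<alpha> :: "nat \<Rightarrow> real"
    and \<kappa>1 \<kappa>2 :: real
    and \<theta> :: "'m \<Rightarrow> nat \<Rightarrow> (real^'n) \<times> (real^'m)"
    and \<theta>hat :: "'m \<Rightarrow> nat \<Rightarrow> (real^'n) \<times> (real^'m)"
  assumes ujsc: "UJSC E"
    and weights: "weight_rules E a \<gamma>"
    and X: "X \<noteq> {}" "compact X" "convex X"
    and f_convex: "\<And>i. convex_on UNIV (f i)"
    and Y: "\<And>i. Y i \<noteq> {}" "\<And>i. compact (Y i)" "\<And>i. convex (Y i)"
    and g_cont: "\<And>i. continuous_on (X \<times> Y i) (\<lambda>(x, y). g i x y)"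
    and g_convex: "\<And>i y. y \<in> Y i \<Longrightarrow> convex_on UNIV (\<lambda>x. g i x y)"
    and Yk: "\<And>i. finite (Yk i)" "\<And>i. Yk i \<subseteq> Y i"
    and eps: "\<And>i. eps i > 0"
    and feasible: "\<exists>x\<in>X. \<forall>i. \<forall>y\<in>Yk i. g i x y \<le> - eps i"
    and interior: "\<exists>x\<in>X. \<forall>i. \<forall>y\<in>Yk i. g i x y < - eps i"
    and alpha_pos: "\<And>t. \<alpha> t > 0"
    and alpha_noninc: "\<And>t. \<alpha> (Suc t) \<le> \<alpha> t"
    and kappa: "0 < \<kappa>1" "\<kappa>1 \<le> \<kappa>2"
    and alpha_bounds: "\<And>t. \<kappa>1 / sqrt (real t + 1) \<le> \<alpha> t"
                      "\<And>t. \<alpha> t \<le> \<kappa>2 / sqrt (real t + 1)"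
    and dpg: "\<And>i t. \<theta> i (Suc t) =
                closest_point (Omega_i X f g Yk eps i) ((\<Sum>j\<in>UNIV. a t i j *\<^sub>R \<theta> j t) - \<alpha> t *\<^sub>R cvec)"
    and theta_hat: "\<And>i t. \<theta>hat i t =
                (\<Sum>r\<le>t. \<alpha> r *\<^sub>R \<theta> i r) /\<^sub>R (\<Sum>\<tau>\<le>t. \<alpha> \<tau>)"
  shows "\<exists>K. \<forall>i. \<forall>t\<ge>1. \<bar>f0 (\<theta>hat i t) - f0star X f g Yk eps\<bar> \<le> K * ln (real t + 1) / sqrt (real t)"

proof -
  obtain S where S: "S > 0" and sc: "\<And>t. strongly_connected (\<Union>s\<in>{t..<t+S}. E s)"
    using ujsc unfolding UJSC_def by blast
  interpret M: main E a \<gamma> S X f g Y Yk eps \<alpha> \<theta>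
  proof (unfold_locales)
    show "weight_rules E a \<gamma>" by (rule weights)
  qed (use S sc X f_convex g_convex Yk eps feasible interior alpha_pos alpha_noninc dpg in auto)
  obtain P0 P1 where P: "P0 \<ge> 0" "P1 \<ge> 0"
    and bnd: "\<And>i T. T \<ge> 1 \<Longrightarrow> \<bar>\<Sum>r\<le>T. \<alpha> r * (f0 (\<theta> i r) - f0star X f g Yk eps)\<bar> \<le> P0 + P1 * ln (real T + 1)"
    using M.sum_bound[OF kappa(1) alpha_bounds(2)] by blast
  define K where "K = (P0 / ln 2 + P1) / \<kappa>1"
  have "\<bar>f0 (\<theta>hat i t) - f0star X f g Yk eps\<bar> \<le> K * ln (real t + 1) / sqrt (real t)" if t: "t \<ge> 1" for i t
  proof -
    define s where "s = (\<Sum>\<tau>\<le>t. \<alpha> \<tau>)"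
    define fs where "fs = f0star X f g Yk eps"
    have sb: "s \<ge> \<kappa>1 * sqrt (real t + 1)"
    proof -
      have "(\<Sum>\<tau>\<le>t. \<kappa>1 / sqrt (real \<tau> + 1)) \<le> s" unfolding s_def by (intro sum_mono alpha_bounds(1))
      then show ?thesis using sqrt_sum[of \<kappa>1 t] kappa(1) by simp
    qed
    have sqt: "sqrt (real t) > 0" using t by simp
    have sq: "\<kappa>1 * sqrt (real t) \<le> s"
    proof -
      have "\<kappa>1 * sqrt (real t) \<le> \<kappa>1 * sqrt (real t + 1)" using kappa(1) by (intro mult_left_mono) auto
      then show ?thesis using sb by linarith
    qed
    have kpos: "\<kappa>1 * sqrt (real t) > 0" using kappa(1) sqt by simp
    have spos: "s > 0" using sq kpos by linarith
    have eq: "f0 (\<theta>hat i t) - fs = (\<Sum>r\<le>t. \<alpha> r * (f0 (\<theta> i r) - fs)) / s"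
    proof -
      have "f0 (\<theta>hat i t) = (\<Sum>r\<le>t. \<alpha> r * f0 (\<theta> i r)) / s"
        unfolding theta_hat s_def by (simp add: f0_linear divide_inverse mult.commute)
      moreover have "(\<Sum>r\<le>t. \<alpha> r * (f0 (\<theta> i r) - fs)) = (\<Sum>r\<le>t. \<alpha> r * f0 (\<theta> i r)) - fs * s"
        unfolding s_def by (simp add: algebra_simps sum_subtractf sum_distrib_left)
      ultimately show ?thesis using spos by (simp add: field_simps)
    qed
    have ln2: "ln 2 > (0::real)" by simp
    have lnt: "ln (real t + 1) \<ge> ln 2" using t by simp
    have "\<bar>f0 (\<theta>hat i t) - fs\<bar> = \<bar>\<Sum>r\<le>t. \<alpha> r * (f0 (\<theta> i r) - fs)\<bar> / s" unfolding eq using spos by simp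
    also have "\<dots> \<le> (P0 + P1 * ln (real t + 1)) / s" using bnd[OF t, of i] spos unfolding fs_def
      by (intro divide_right_mono) auto
    also have "\<dots> \<le> (P0 + P1 * ln (real t + 1)) / (\<kappa>1 * sqrt (real t))"
      using P lnt ln2 kpos sq by (intro divide_left_mono) (auto intro!: add_nonneg_nonneg mult_nonneg_nonneg)
    also have "P0 + P1 * ln (real t + 1) \<le> (P0 / ln 2 + P1) * ln (real t + 1)"
    proof -
      have "P0 = (P0 / ln 2) * ln 2" using ln2 by simp
      also have "\<dots> \<le> (P0 / ln 2) * ln (real t + 1)" using P ln2 lnt by (intro mult_left_mono) auto
      finally show ?thesis by (simp add: algebra_simps)
    qed
    then have "(P0 + P1 * ln (real t + 1)) / (\<kappa>1 * sqrt (real t)) \<le> (P0 / ln 2 + P1) * ln (real t + 1) / (\<kappa>1 * sqrt (real t))"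
      using kpos by (intro divide_right_mono) auto
    also have "\<dots> = K * ln (real t + 1) / sqrt (real t)" unfolding K_def using kappa(1) sqt by (simp add: field_simps)
    finally show ?thesis unfolding fs_def .
  qed
  then show ?thesis by blast
qed


end
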